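(* Let $(R,[\cdot_\lambda\cdot],\alpha,\beta)$ be a regular BiHom-Lie conformal superalgebra, $(M,\phi,\psi)$ a BiHom-conformal module of $R$ with representation $\rho$ and with $\phi,\psi$ invertible, and let $T:M\to R$ be an $\mathcal{O}$-operator associated with $\rho$. Then the $\lambda$-product $$[u_\lambda v]_T=\rho(Tu)_\lambda v-(-1)^{|u||v|}\rho(T\phi^{-1}\psi(v))_{-\lambda-\partial}\,\phi\psi^{-1}(u),\qquad u,v\in M,$$ defines a BiHom-Lie conformal superalgebra structure $(M,[\cdot_\lambda\cdot]_T,\phi,\psi)$ on $M$.
   Context: All spaces are over $\mathbb{C}$. For a $\mathbb{C}[\partial]$-module $V$, $V[\lambda]=\mathbb{C}[\lambda]\otimes V$. $|a|$ denotes the parity of a homogeneous element. Substitution $\lambda\mapsto-\lambda-\partial$ means: expand in powers of $\lambda$ and replace $\lambda$ by $-\lambda-\partial$, $\partial$ acting on the coefficients. A BiHom-Lie conformal superalgebra $(R,[\cdot_\lambda\cdot],\alpha,\beta)$ is a $\mathbb{Z}_2$-graded $\mathbb{C}[\partial]$-module $R$ with two commuting linear maps $\alpha,\beta$ and a $\mathbb{C}$-linear map $R\otimes R\to R[\lambda]$, $a\otimes b\mapsto[a_\lambda b]$, with $[R_{i\,\lambda}R_j]\subseteq R_{i+j}[\lambda]$, such that for all homogeneous $a,b,c$: (1) $\alpha\partial=\partial\alpha$, $\beta\partial=\partial\beta$; (2) $\alpha([a_\lambda b])=[\alpha(a)_\lambda\alpha(b)]$, $\beta([a_\lambda b])=[\beta(a)_\lambda\beta(b)]$;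 (3) $[(\partial a)_\lambda b]=-\lambda[a_\lambda b]$, $[a_\lambda(\partial b)]=(\partial+\lambda)[a_\lambda b]$; (4) $[\beta(a)_\lambda\alpha(b)]=-(-1)^{|a||b|}[\beta(b)_{-\lambda-\partial}\alpha(a)]$; (5) $[\alpha\beta(a)_\lambda[b_\mu c]]=[[\beta(a)_\lambda b]_{\lambda+\mu}\beta(c)]+(-1)^{|a||b|}[\beta(b)_\mu[\alpha(a)_\lambda c]]$. It is regular if $\alpha,\beta$ are bijective. A BiHom-conformal module $(M,\phi,\psi)$ of $R$ is a $\mathbb{Z}_2$-graded $\mathbb{C}[\partial]$-module $M$ with linear maps $\phi,\psi$ and a $\mathbb{C}$-linear map $\rho$ assigning to $a\in R$ a $\mathbb{C}$-linear map $\rho(a)_\lambda:M\to M[\lambda]$ (of parity $|a|$), such that for all homogeneous $a,b\in R$: $\rho(\partial a)_\lambda=-\lambda\rho(a)_\lambda$, $\rho(a)_\lambda\partial=(\lambda+\partial)\rho(a)_\lambda$; $\phi\psi=\psi\phi$, $\psi\partial=\partial\psi$, $\phi\partial=\partial\phi$; $\phi\rho(a)_\lambda=\rho(\alpha(a))_\lambda\phi$, $\psi\rho(a)_\lambda=\rho(\beta(a))_\lambda\psi$; and $\rho([\beta(a)_\lambda b])_{\lambda+\mu}\psi=\rho(\alpha\beta(a))_\lambda\rho(b)_\mu-(-1)^{|a||b|}\rho(\beta(b))_\mu\rho(\alpha(a))_\lambda$ (where $\rho(\sum_n\lambda^nc_n)_{\lambda+\mu}=\sum_n\lambda^n\rho(c_n)_{\lambda+\mu}$).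 An $\mathcal{O}$-operator associated with $\rho$ is a $\mathbb{C}[\partial]$-module homomorphism $T:M\to R$ with $T\circ\phi=\alpha\circ T$, $T\circ\psi=\beta\circ T$, and $[Tu_\lambda Tv]=T\big(\rho(Tu)_\lambda v-(-1)^{|u||v|}\rho(T\phi^{-1}\psi(v))_{-\lambda-\partial}\phi\psi^{-1}(u)\big)$ for all homogeneous $u,v\in M$. *)

theory Defs
  imports Complex_Main
begin

text \<open>The Z2-grading is a map
G :: bool => set, G False = even part, G True = odd part (parity addition = xor).
A polynomial in lambda with coefficients in V (an element of V[lambda]) is a
finitely supported coefficient function nat => V (coefficient of lambda^n).
A polynomial in two variables (lambda, mu) is nat => nat => V (coefficient of
lambda^l mu^m). A lambda-bracket is br a b :: nat => V.\<close>

definition lin :: "(complex \<Rightarrow> 'a::ab_group_add \<Rightarrow> 'a) \<Rightarrow> (complex \<Rightarrow> 'b::ab_group_add \<Rightarrow> 'b) \<Rightarrow> ('a \<Rightarrow> 'b) \<Rightarrow> bool" where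
  "lin s1 s2 f \<longleftrightarrow> (\<forall>x y. f (x + y) = f x + f y) \<and> (\<forall>c x. f (s1 c x) = s2 c (f x))"

definition csubspace :: "(complex \<Rightarrow> 'a::ab_group_add \<Rightarrow> 'a) \<Rightarrow> 'a set \<Rightarrow> bool" where
  "csubspace s S \<longleftrightarrow> 0 \<in> S \<and> (\<forall>x\<in>S. \<forall>y\<in>S. x + y \<in> S) \<and> (\<forall>c. \<forall>x\<in>S. s c x \<in> S)"

definition graded_space :: "(complex \<Rightarrow> 'a::ab_group_add \<Rightarrow> 'a) \<Rightarrow> (bool \<Rightarrow> 'a set) \<Rightarrow> bool" where
  "graded_space s G \<longleftrightarrow> module s \<and> csubspace s (G False) \<and> csubspace s (G True)
     \<and> G False \<inter> G True = {0} \<and> (\<forall>x. \<exists>y\<in>G False. \<exists>z\<in>G True. x = y + z)"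

definition even_map :: "(bool \<Rightarrow> 'a set) \<Rightarrow> (bool \<Rightarrow> 'b set) \<Rightarrow> ('a \<Rightarrow> 'b) \<Rightarrow> bool" where
  "even_map G G' f \<longleftrightarrow> (\<forall>i. \<forall>x\<in>G i. f x \<in> G' i)"

definition gproj :: "(bool \<Rightarrow> 'a::ab_group_add set) \<Rightarrow> bool \<Rightarrow> 'a \<Rightarrow> 'a" where
  "gproj G i x = (THE y. y \<in> G i \<and> x - y \<in> G (\<not> i))"

definition fin_supp :: "(nat \<Rightarrow> 'a::zero) \<Rightarrow> bool" where
  "fin_supp c \<longleftrightarrow> finite {n. c n \<noteq> 0}"

definition sgnx :: "bool \<Rightarrow> bool \<Rightarrow> 'a::group_add \<Rightarrow> 'a" where
  "sgnx i j x = (if i \<and> j then - x else x)"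

definition lam_mul :: "(nat \<Rightarrow> 'a::zero) \<Rightarrow> nat \<Rightarrow> 'a" where
  "lam_mul c n = (if n = 0 then 0 else c (n - 1))"

text \<open>Substitution lambda |-> -lambda-D in sum_n lambda^n c_n, D acting on coefficients:
  sum_n (-lambda-D)^n c_n has lambda^k-coefficient sum_n binom(n,k) (-1)^n D^(n-k) c_n.\<close>
definition subst_neg :: "(complex \<Rightarrow> 'a::ab_group_add \<Rightarrow> 'a) \<Rightarrow> ('a \<Rightarrow> 'a) \<Rightarrow> (nat \<Rightarrow> 'a) \<Rightarrow> nat \<Rightarrow> 'a" where
  "subst_neg s D c k = (\<Sum>n\<in>{n. k \<le> n \<and> c n \<noteq> 0}. s (of_nat (n choose k) * (- 1) ^ n) ((D ^^ (n - k)) (c n)))"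

text \<open>Given c p q, the expression sum_{p,q} lambda^p (lambda+mu)^q c p q as a polynomial
  in (lambda, mu): coefficient of lambda^l mu^m.\<close>
definition subst_sum :: "(complex \<Rightarrow> 'a::ab_group_add \<Rightarrow> 'a) \<Rightarrow> (nat \<Rightarrow> nat \<Rightarrow> 'a) \<Rightarrow> nat \<Rightarrow> nat \<Rightarrow> 'a" where
  "subst_sum s c l m = (\<Sum>p\<le>l. s (of_nat ((l - p + m) choose m)) (c p (l - p + m)))"

definition bihom_lcsa :: "(complex \<Rightarrow> 'r::ab_group_add \<Rightarrow> 'r) \<Rightarrow> (bool \<Rightarrow> 'r set) \<Rightarrow> ('r \<Rightarrow> 'r)
    \<Rightarrow> ('r \<Rightarrow> 'r \<Rightarrow> nat \<Rightarrow> 'r) \<Rightarrow> ('r \<Rightarrow> 'r) \<Rightarrow> ('r \<Rightarrow> 'r) \<Rightarrow> bool" where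
  "bihom_lcsa s G D br \<alpha> \<beta> \<longleftrightarrow>
     graded_space s G \<and> lin s s D \<and> even_map G G D \<and>
     lin s s \<alpha> \<and> lin s s \<beta> \<and> even_map G G \<alpha> \<and> even_map G G \<beta> \<and> \<alpha> \<circ> \<beta> = \<beta> \<circ> \<alpha> \<and>
     (\<forall>b n. lin s s (\<lambda>a. br a b n)) \<and> (\<forall>a n. lin s s (\<lambda>b. br a b n)) \<and>
     (\<forall>a b. fin_supp (br a b)) \<and>
     (\<forall>i j. \<forall>a\<in>G i. \<forall>b\<in>G j. \<forall>n. br a b n \<in> G (i \<noteq> j)) \<and>
     \<alpha> \<circ> D = D \<circ> \<alpha> \<and> \<beta> \<circ> D = D \<circ> \<beta> \<and>
     (\<forall>a b n. \<alpha> (br a b n) = br (\<alpha> a) (\<alpha> b) n) \<and>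
     (\<forall>a b n. \<beta> (br a b n) = br (\<beta> a) (\<beta> b) n) \<and>
     (\<forall>a b. br (D a) b = (\<lambda>n. - lam_mul (br a b) n)) \<and>
     (\<forall>a b. br a (D b) = (\<lambda>n. D (br a b n) + lam_mul (br a b) n)) \<and>
     (\<forall>i j. \<forall>a\<in>G i. \<forall>b\<in>G j.
        br (\<beta> a) (\<alpha> b) = (\<lambda>n. - sgnx i j (subst_neg s D (br (\<beta> b) (\<alpha> a)) n))) \<and>
     (\<forall>i j k. \<forall>a\<in>G i. \<forall>b\<in>G j. \<forall>c\<in>G k. \<forall>l m.
        br (\<alpha> (\<beta> a)) (br b c m) l
          = subst_sum s (\<lambda>p q. br (br (\<beta> a) b p) (\<beta> c) q) l m
            + sgnx i j (br (\<beta> b) (br (\<alpha> a) c l) m))"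

definition bihom_conf_module :: "(complex \<Rightarrow> 'r::ab_group_add \<Rightarrow> 'r) \<Rightarrow> (bool \<Rightarrow> 'r set) \<Rightarrow> ('r \<Rightarrow> 'r)
    \<Rightarrow> ('r \<Rightarrow> 'r \<Rightarrow> nat \<Rightarrow> 'r) \<Rightarrow> ('r \<Rightarrow> 'r) \<Rightarrow> ('r \<Rightarrow> 'r)
    \<Rightarrow> (complex \<Rightarrow> 'm::ab_group_add \<Rightarrow> 'm) \<Rightarrow> (bool \<Rightarrow> 'm set) \<Rightarrow> ('m \<Rightarrow> 'm)
    \<Rightarrow> ('r \<Rightarrow> 'm \<Rightarrow> nat \<Rightarrow> 'm) \<Rightarrow> ('m \<Rightarrow> 'm) \<Rightarrow> ('m \<Rightarrow> 'm) \<Rightarrow> bool" where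
  "bihom_conf_module sR GR DR brR \<alpha> \<beta> sM GM DM \<rho> \<phi> \<psi> \<longleftrightarrow>
     graded_space sM GM \<and> lin sM sM DM \<and> even_map GM GM DM \<and>
     lin sM sM \<phi> \<and> lin sM sM \<psi> \<and> even_map GM GM \<phi> \<and> even_map GM GM \<psi> \<and>
     (\<forall>v n. lin sR sM (\<lambda>a. \<rho> a v n)) \<and> (\<forall>a n. lin sM sM (\<lambda>v. \<rho> a v n)) \<and>
     (\<forall>a v. fin_supp (\<rho> a v)) \<and>
     (\<forall>i j. \<forall>a\<in>GR i. \<forall>v\<in>GM j. \<forall>n. \<rho> a v n \<in> GM (i \<noteq> j)) \<and>
     (\<forall>a v. \<rho> (DR a) v = (\<lambda>n. - lam_mul (\<rho> a v) n)) \<and>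
     (\<forall>a v. \<rho> a (DM v) = (\<lambda>n. DM (\<rho> a v n) + lam_mul (\<rho> a v) n)) \<and>
     \<phi> \<circ> \<psi> = \<psi> \<circ> \<phi> \<and> \<psi> \<circ> DM = DM \<circ> \<psi> \<and> \<phi> \<circ> DM = DM \<circ> \<phi> \<and>
     (\<forall>a v n. \<phi> (\<rho> a v n) = \<rho> (\<alpha> a) (\<phi> v) n) \<and>
     (\<forall>a v n. \<psi> (\<rho> a v n) = \<rho> (\<beta> a) (\<psi> v) n) \<and>
     (\<forall>i j. \<forall>a\<in>GR i. \<forall>b\<in>GR j. \<forall>v l m.
        subst_sum sM (\<lambda>p q. \<rho> (brR (\<beta> a) b p) (\<psi> v) q) l m
          = \<rho> (\<alpha> (\<beta> a)) (\<rho> b v m) l - sgnx i j (\<rho> (\<beta> b) (\<rho> (\<alpha> a) v l) m))"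

text \<open>The lambda-product [u_lambda v]_T on homogeneous u (parity i), v (parity j).\<close>
definition prodT_h :: "(complex \<Rightarrow> 'm::ab_group_add \<Rightarrow> 'm) \<Rightarrow> ('m \<Rightarrow> 'm) \<Rightarrow> ('r \<Rightarrow> 'm \<Rightarrow> nat \<Rightarrow> 'm)
    \<Rightarrow> ('m \<Rightarrow> 'm) \<Rightarrow> ('m \<Rightarrow> 'm) \<Rightarrow> ('m \<Rightarrow> 'r) \<Rightarrow> bool \<Rightarrow> bool \<Rightarrow> 'm \<Rightarrow> 'm \<Rightarrow> nat \<Rightarrow> 'm" where
  "prodT_h sM DM \<rho> \<phi> \<psi> T i j u v n =
     \<rho> (T u) v n - sgnx i j (subst_neg sM DM (\<rho> (T (inv \<phi> (\<psi> v))) (\<phi> (inv \<psi> u))) n)"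

definition prodT :: "(complex \<Rightarrow> 'm::ab_group_add \<Rightarrow> 'm) \<Rightarrow> (bool \<Rightarrow> 'm set) \<Rightarrow> ('m \<Rightarrow> 'm)
    \<Rightarrow> ('r \<Rightarrow> 'm \<Rightarrow> nat \<Rightarrow> 'm) \<Rightarrow> ('m \<Rightarrow> 'm) \<Rightarrow> ('m \<Rightarrow> 'm) \<Rightarrow> ('m \<Rightarrow> 'r) \<Rightarrow> 'm \<Rightarrow> 'm \<Rightarrow> nat \<Rightarrow> 'm" where
  "prodT sM GM DM \<rho> \<phi> \<psi> T u v n =
     (\<Sum>i\<in>UNIV. \<Sum>j\<in>UNIV. prodT_h sM DM \<rho> \<phi> \<psi> T i j (gproj GM i u) (gproj GM j v) n)"

definition O_operator :: "(complex \<Rightarrow> 'r::ab_group_add \<Rightarrow> 'r) \<Rightarrow> (bool \<Rightarrow> 'r set) \<Rightarrow> ('r \<Rightarrow> 'r)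
    \<Rightarrow> ('r \<Rightarrow> 'r \<Rightarrow> nat \<Rightarrow> 'r) \<Rightarrow> ('r \<Rightarrow> 'r) \<Rightarrow> ('r \<Rightarrow> 'r)
    \<Rightarrow> (complex \<Rightarrow> 'm::ab_group_add \<Rightarrow> 'm) \<Rightarrow> (bool \<Rightarrow> 'm set) \<Rightarrow> ('m \<Rightarrow> 'm)
    \<Rightarrow> ('r \<Rightarrow> 'm \<Rightarrow> nat \<Rightarrow> 'm) \<Rightarrow> ('m \<Rightarrow> 'm) \<Rightarrow> ('m \<Rightarrow> 'm) \<Rightarrow> ('m \<Rightarrow> 'r) \<Rightarrow> bool" where
  "O_operator sR GR DR brR \<alpha> \<beta> sM GM DM \<rho> \<phi> \<psi> T \<longleftrightarrow>
     lin sM sR T \<and> T \<circ> DM = DR \<circ> T \<and> even_map GM GR T \<and>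
     T \<circ> \<phi> = \<alpha> \<circ> T \<and> T \<circ> \<psi> = \<beta> \<circ> T \<and>
     (\<forall>i j. \<forall>u\<in>GM i. \<forall>v\<in>GM j.
        brR (T u) (T v) = (\<lambda>n. T (prodT_h sM DM \<rho> \<phi> \<psi> T i j u v n)))"

end

theory Submission
  imports Defs "HOL-Computational_Algebra.Polynomial"
begin


definition bnd :: "nat \<Rightarrow> (nat \<Rightarrow> 'a::zero) \<Rightarrow> bool" where
  "bnd N g \<longleftrightarrow> (\<forall>n>N. g n = 0)"

definition bnd2 :: "nat \<Rightarrow> (nat \<Rightarrow> nat \<Rightarrow> 'a::zero) \<Rightarrow> bool" where
  "bnd2 N F \<longleftrightarrow> (\<forall>l m. N < l \<or> N < m \<longrightarrow> F l m = 0)"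

definition fin2 :: "(nat \<Rightarrow> nat \<Rightarrow> 'a::zero) \<Rightarrow> bool" where
  "fin2 F \<longleftrightarrow> (\<exists>N. bnd2 N F)"

lemma bnd_mono: "bnd N g \<Longrightarrow> N \<le> M \<Longrightarrow> bnd M g"
  by (auto simp: bnd_def)
lemma bnd2_mono: "bnd2 N g \<Longrightarrow> N \<le> M \<Longrightarrow> bnd2 M g"
  by (auto simp: bnd2_def)

lemma fin_supp_bnd: "fin_supp g \<longleftrightarrow> (\<exists>N. bnd N g)"
proof
  assume "fin_supp g"
  then have f: "finite {n. g n \<noteq> 0}" by (simp add: fin_supp_def)
  then obtain N where "\<forall>n\<in>{n. g n \<noteq> 0}. n \<le> N"
    using finite_nat_set_iff_bounded_le by blast
  then show "\<exists>N. bnd N g" by (auto simp: bnd_def intro!: exI[of _ N])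
next
  assume "\<exists>N. bnd N g"
  then obtain N where "bnd N g" by blast
  then have "{n. g n \<noteq> 0} \<subseteq> {..N}" by (auto simp: bnd_def not_le[symmetric])
  then show "fin_supp g" by (simp add: fin_supp_def finite_subset)
qed

lemma lin_additive: "lin s1 s2 f \<Longrightarrow> additive f"
  by (simp add: lin_def additive_def)

lemma lin_zero: "lin s1 s2 f \<Longrightarrow> f 0 = 0"
  using additive.zero lin_additive by blast
lemma lin_add: "lin s1 s2 f \<Longrightarrow> f (x + y) = f x + f y"
  by (simp add: lin_def)
lemma lin_minus: "lin s1 s2 f \<Longrightarrow> f (- x) = - f x"
  using additive.minus lin_additive by blast
lemma lin_diff: "lin s1 s2 f \<Longrightarrow> f (x - y) = f x - f y"
  using additive.diff lin_additive by blast
lemma lin_sum: "lin s1 s2 f \<Longrightarrow> f (sum g A) = (\<Sum>x\<in>A. f (g x))"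
  using additive.sum lin_additive by blast
lemma lin_scale: "lin s1 s2 f \<Longrightarrow> f (s1 c x) = s2 c (f x)"
  by (simp add: lin_def)

lemma lin_comp: "lin s1 s2 f \<Longrightarrow> lin s2 s3 g \<Longrightarrow> lin s1 s3 (\<lambda>x. g (f x))"
  by (simp add: lin_def)

lemma lin_funpow: "lin s s f \<Longrightarrow> lin s s (f ^^ k)"
  by (induction k) (auto simp: lin_def)

lemma funpow_comm: "(\<And>x. f (g x) = g (f x)) \<Longrightarrow> f ((g ^^ k) x) = (g ^^ k) (f x)"
  by (induction k) auto

lemma funpow_comm2: "(\<And>x. f (g x) = h (f x)) \<Longrightarrow> f ((g ^^ k) x) = (h ^^ k) (f x)"
  by (induction k) auto

definition opD :: "(complex \<Rightarrow> 'a::ab_group_add \<Rightarrow> 'a) \<Rightarrow> ('a \<Rightarrow> 'a) \<Rightarrow> complex poly \<Rightarrow> 'a \<Rightarrow> 'a" where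
  "opD s D r v = (\<Sum>k\<le>degree r. s (coeff r k) ((D ^^ k) v))"

definition ev1 :: "(complex \<Rightarrow> 'a::ab_group_add \<Rightarrow> 'a) \<Rightarrow> ('a \<Rightarrow> 'a) \<Rightarrow> (nat \<Rightarrow> 'a) \<Rightarrow> complex poly \<Rightarrow> 'a" where
  "ev1 s D g P = (\<Sum>n\<in>{n. g n \<noteq> 0}. opD s D (P ^ n) (g n))"

definition ev2 :: "(complex \<Rightarrow> 'a::ab_group_add \<Rightarrow> 'a) \<Rightarrow> ('a \<Rightarrow> 'a) \<Rightarrow> (nat \<Rightarrow> nat \<Rightarrow> 'a) \<Rightarrow> complex poly \<Rightarrow> complex poly \<Rightarrow> 'a" where
  "ev2 s D F P Q = ev1 s D (\<lambda>l. ev1 s D (F l) Q) P"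

abbreviation pX :: "complex poly" where "pX \<equiv> [:0, 1:]"

locale cmod = module s for s :: "complex \<Rightarrow> 'a::ab_group_add \<Rightarrow> 'a" +
  fixes D :: "'a \<Rightarrow> 'a"
  assumes lD: "lin s s D"
begin

lemma lin_s: "lin s s (s c)"
  by (simp add: lin_def scale_right_distrib mult.commute)

lemma D_add: "D (x + y) = D x + D y" using lD lin_add by blast
lemma D_zero[simp]: "D 0 = 0" using lD lin_zero by blast
lemma D_scale: "D (s c x) = s c (D x)" using lD lin_scale by blast
lemma D_sum: "D (sum g A) = (\<Sum>x\<in>A. D (g x))" using lD lin_sum by blast

lemma Dk_lin: "lin s s (D ^^ k)" using lD lin_funpow by blast
lemma Dk_zero[simp]: "(D ^^ k) 0 = 0" using Dk_lin lin_zero by blast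

lemma opD_bound: "degree r \<le> N \<Longrightarrow> opD s D r v = (\<Sum>k\<le>N. s (coeff r k) ((D ^^ k) v))"
  unfolding opD_def
  by (rule sum.mono_neutral_left) (auto simp: coeff_eq_0)

lemma opD_lin: "lin s s (opD s D r)"
proof -
  have "lin s s (\<lambda>v. s (coeff r k) ((D ^^ k) v))" for k
    using lin_comp[OF Dk_lin lin_s] by blast
  then show ?thesis
    unfolding opD_def lin_def by (auto simp: sum.distrib scale_sum_right)
qed

lemma opD_vadd: "opD s D r (x + y) = opD s D r x + opD s D r y" using opD_lin lin_add by blast
lemma opD_vzero[simp]: "opD s D r 0 = 0" using opD_lin lin_zero by blast
lemma opD_vminus: "opD s D r (- x) = - opD s D r x" using opD_lin lin_minus by blast
lemma opD_vdiff: "opD s D r (x - y) = opD s D r x - opD s D r y" using opD_lin lin_diff by blast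
lemma opD_vsum: "opD s D r (sum g A) = (\<Sum>x\<in>A. opD s D r (g x))" using opD_lin lin_sum by blast
lemma opD_vscale: "opD s D r (s c x) = s c (opD s D r x)" using opD_lin lin_scale by blast

lemma opD_0[simp]: "opD s D 0 v = 0" by (simp add: opD_def)

lemma opD_add: "opD s D (p + q) v = opD s D p v + opD s D q v"
proof -
  let ?N = "max (degree p) (degree q)"
  have "degree (p + q) \<le> ?N" by (rule degree_add_le) auto
  then show ?thesis
    by (simp add: opD_bound[of _ ?N] sum.distrib scale_left_distrib)
qed

lemma opD_smult: "opD s D (smult c p) v = s c (opD s D p v)"
  by (simp add: opD_def scale_sum_right)

lemma opD_pCons: "opD s D (pCons a r) v = s a v + D (opD s D r v)"
proof -
  have "opD s D (pCons a r) v = (\<Sum>k\<le>Suc (degree r). s (coeff (pCons a r) k) ((D ^^ k) v))"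
    by (rule opD_bound) (simp add: degree_pCons_le)
  also have "\<dots> = s a v + (\<Sum>k\<le>degree r. s (coeff r k) ((D ^^ Suc k) v))"
    by (simp only: sum.atMost_Suc_shift coeff_pCons_0 coeff_pCons_Suc funpow_0 id_def)
  also have "\<dots> = s a v + D (opD s D r v)"
    by (simp add: opD_def D_sum D_scale)
  finally show ?thesis .
qed

lemma opD_minus: "opD s D (- p) v = - opD s D p v"
  using opD_smult[of "-1" p v] by simp

lemma opD_diff: "opD s D (p - q) v = opD s D p v - opD s D q v"
  using opD_add[of p "- q" v] by (simp add: opD_minus)

lemma opD_sum: "opD s D (sum f A) v = (\<Sum>x\<in>A. opD s D (f x) v)"
  by (induction A rule: infinite_finite_induct) (auto simp: opD_add)

lemma opD_mult: "opD s D (p * q) v = opD s D p (opD s D q v)"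
proof (induction p)
  case 0
  then show ?case by simp
next
  case (pCons a p)
  have "pCons a p * q = smult a q + pCons 0 (p * q)" by simp
  then show ?case
    by (simp only: opD_add opD_smult opD_pCons pCons.IH) simp
qed

lemma opD_const: "opD s D [:c:] v = s c v"
  by (simp add: opD_def)

lemma opD_one[simp]: "opD s D 1 v = v"
  by (simp add: opD_def)

lemma opD_X: "opD s D pX v = D v"
  by (simp add: opD_pCons)

lemma opD_comm: "opD s D p (opD s D q v) = opD s D q (opD s D p v)"
  by (metis opD_mult mult.commute)

lemma opD_D: "opD s D p (D v) = D (opD s D p v)"
  by (metis opD_X opD_comm)

end

lemma opD_hom:
  assumes "module s1" "module s2" "lin s1 s2 f" "\<And>v. f (D1 v) = D2 (f v)"
  shows "f (opD s1 D1 r v) = opD s2 D2 r (f v)"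
proof -
  have "f ((D1 ^^ k) v) = (D2 ^^ k) (f v)" for k
    by (rule funpow_comm2) (rule assms(4))
  then show ?thesis
    unfolding opD_def using assms(3) by (simp add: lin_sum lin_scale)
qed


lemma pcompose_pow: "pcompose (p ^ n) r = (pcompose p r) ^ n"
  by (induction n) (auto simp: pcompose_mult pcompose_1)

definition rco :: "nat \<Rightarrow> nat \<Rightarrow> complex poly \<Rightarrow> complex poly" where
  "rco n k Y = (if k \<le> n then smult (of_nat (n choose k) * (-1) ^ n) (Y ^ (n - k)) else 0)"

lemma neg1pow_smult: "((-1::'a::comm_ring_1 poly) ^ n) * p = smult ((-1) ^ n) p"
  by (induction n) (auto simp: mult.assoc)

lemma ofnat_smult: "(of_nat m :: 'a::comm_ring_1 poly) * p = smult (of_nat m) p"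
  by (simp add: of_nat_poly)

lemma polybin:
  assumes "n \<le> N"
  shows "(\<Sum>k\<le>N. Q ^ k * rco n k Y) = (- Q - Y) ^ n"
proof -
  have e1: "- Q - Y = - (Q + Y)" by simp
  have "(- Q - Y) ^ n = ((-1) ^ n) * (Q + Y) ^ n"
    unfolding e1 by (rule power_minus)
  also have "\<dots> = (\<Sum>k\<le>n. ((-1) ^ n) * (of_nat (n choose k) * Q ^ k * Y ^ (n - k)))"
    by (simp only: binomial_ring sum_distrib_left)
  also have "\<dots> = (\<Sum>k\<le>n. Q ^ k * rco n k Y)"
  proof (rule sum.cong)
    fix k assume "k \<in> {..n}"
    then have kn: "k \<le> n" by simp
    have "((-1) ^ n) * (of_nat (n choose k) * Q ^ k * Y ^ (n - k))
        = smult ((-1) ^ n) (smult (of_nat (n choose k)) (Q ^ k * Y ^ (n - k)))"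
      by (simp only: neg1pow_smult mult.assoc ofnat_smult mult_smult_left)
    also have "\<dots> = Q ^ k * rco n k Y"
      using kn by (simp add: rco_def mult.commute)
    finally show "((-1) ^ n) * (of_nat (n choose k) * Q ^ k * Y ^ (n - k)) = Q ^ k * rco n k Y" .
  qed simp
  also have "\<dots> = (\<Sum>k\<le>N. Q ^ k * rco n k Y)"
    by (rule sum.mono_neutral_left) (use assms in \<open>auto simp: rco_def\<close>)
  finally show ?thesis by simp
qed

context cmod begin

lemma opD_Xpow: "opD s D (pX ^ j) v = (D ^^ j) v"
proof (induction j arbitrary: v)
  case 0 then show ?case by simp
next
  case (Suc j)
  have "opD s D (pX ^ Suc j) v = opD s D pX (opD s D (pX ^ j) v)"
    by (simp only: power_Suc opD_mult)
  then show ?case by (simp add: Suc.IH opD_X)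
qed

lemma opD_hom_self: "lin s s f \<Longrightarrow> (\<And>v. f (D v) = D (f v)) \<Longrightarrow> f (opD s D r v) = opD s D r (f v)"
  using opD_hom[of s s f D D] cmod_axioms cmod_def by blast

lemma lin_uminus: "lin s s uminus"
  by (simp add: lin_def)

lemma lin_sgnx: "lin s s (sgnx i j)"
proof (cases "i \<and> j")
  case True
  then have "sgnx i j = uminus" by (auto simp: sgnx_def fun_eq_iff)
  show ?thesis unfolding \<open>sgnx i j = uminus\<close> by (rule lin_uminus)
next
  case False
  then have "sgnx i j = id" by (auto simp: sgnx_def fun_eq_iff)
  show ?thesis unfolding \<open>sgnx i j = id\<close> by (simp add: lin_def)
qed

lemma ev1_bnd: "bnd N g \<Longrightarrow> ev1 s D g P = (\<Sum>n\<le>N. opD s D (P ^ n) (g n))"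
  unfolding ev1_def
  by (rule sum.mono_neutral_left) (auto simp: bnd_def not_le[symmetric])

lemma bnd_lin: "lin s s f \<Longrightarrow> bnd N g \<Longrightarrow> bnd N (\<lambda>n. f (g n))"
  using lin_zero by (fastforce simp: bnd_def)

lemma ev1_lin: "lin s s f \<Longrightarrow> (\<And>v. f (D v) = D (f v)) \<Longrightarrow> bnd N g \<Longrightarrow>
   ev1 s D (\<lambda>n. f (g n)) P = f (ev1 s D g P)"
  by (simp add: ev1_bnd bnd_lin lin_sum opD_hom_self)

lemma ev1_add: "bnd N g \<Longrightarrow> bnd N h \<Longrightarrow> ev1 s D (\<lambda>n. g n + h n) P = ev1 s D g P + ev1 s D h P"
proof -
  assume b: "bnd N g" "bnd N h"
  then have "bnd N (\<lambda>n. g n + h n)" by (simp add: bnd_def)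
  then show ?thesis by (simp add: ev1_bnd[OF b(1)] ev1_bnd[OF b(2)] ev1_bnd opD_vadd sum.distrib)
qed

lemma ev1_diff: "bnd N g \<Longrightarrow> bnd N h \<Longrightarrow> ev1 s D (\<lambda>n. g n - h n) P = ev1 s D g P - ev1 s D h P"
proof -
  assume b: "bnd N g" "bnd N h"
  then have "bnd N (\<lambda>n. g n - h n)" by (simp add: bnd_def)
  then show ?thesis by (simp add: ev1_bnd[OF b(1)] ev1_bnd[OF b(2)] ev1_bnd opD_vdiff sum_subtractf)
qed

lemma ev1_zero[simp]: "ev1 s D (\<lambda>n. 0) P = 0"
  by (simp add: ev1_def)

lemma ev1_lam: "bnd N g \<Longrightarrow> ev1 s D (lam_mul g) P = opD s D P (ev1 s D g P)"
proof -
  assume b: "bnd N g"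
  then have b2: "bnd (Suc N) (lam_mul g)" by (auto simp: bnd_def lam_mul_def)
  have "ev1 s D (lam_mul g) P = (\<Sum>n\<le>Suc N. opD s D (P ^ n) (lam_mul g n))"
    using b2 by (rule ev1_bnd)
  also have "\<dots> = (\<Sum>n\<le>N. opD s D (P ^ Suc n) (g n))"
    by (simp only: sum.atMost_Suc_shift) (simp add: lam_mul_def)
  also have "\<dots> = opD s D P (ev1 s D g P)"
    by (simp add: ev1_bnd[OF b] opD_vsum opD_mult)
  finally show ?thesis .
qed

lemma sn_bnd_eq: "bnd N g \<Longrightarrow> subst_neg s D g k = (\<Sum>n\<le>N. opD s D (rco n k pX) (g n))"
proof -
  assume b: "bnd N g"
  have "subst_neg s D g k = (\<Sum>n\<in>{n. k \<le> n \<and> g n \<noteq> 0}. opD s D (rco n k pX) (g n))"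
    unfolding subst_neg_def
    by (rule sum.cong) (auto simp: rco_def opD_smult opD_Xpow)
  also have "\<dots> = (\<Sum>n\<le>N. opD s D (rco n k pX) (g n))"
    by (rule sum.mono_neutral_left) (use b in \<open>auto simp: bnd_def rco_def not_le[symmetric]\<close>)
  finally show ?thesis .
qed

lemma sn_bnd: "bnd N g \<Longrightarrow> bnd N (subst_neg s D g)"
  by (auto simp: bnd_def sn_bnd_eq rco_def)

lemma ev1_sn: "bnd N g \<Longrightarrow> ev1 s D (subst_neg s D g) P = ev1 s D g (- P - pX)"
proof -
  assume b: "bnd N g"
  have "ev1 s D (subst_neg s D g) P = (\<Sum>k\<le>N. opD s D (P ^ k) (\<Sum>n\<le>N. opD s D (rco n k pX) (g n)))"
    by (simp add: ev1_bnd[OF sn_bnd[OF b]] sn_bnd_eq[OF b])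
  also have "\<dots> = (\<Sum>n\<le>N. opD s D (\<Sum>k\<le>N. P ^ k * rco n k pX) (g n))"
    by (simp only: opD_vsum opD_sum opD_mult) (rule sum.swap)
  also have "\<dots> = (\<Sum>n\<le>N. opD s D ((- P - pX) ^ n) (g n))"
    by (rule sum.cong) (auto simp: polybin)
  also have "\<dots> = ev1 s D g (- P - pX)" by (simp add: ev1_bnd[OF b])
  finally show ?thesis .
qed

lemma ev1_const: "bnd N g \<Longrightarrow> ev1 s D g [:x:] = (\<Sum>n\<le>N. s (x ^ n) (g n))"
  by (simp add: ev1_bnd poly_const_pow opD_const)

lemma scale_cancel: "c \<noteq> 0 \<Longrightarrow> s c v = 0 \<Longrightarrow> v = 0"
  by (metis scale_scale scale_one scale_zero_right field_class.field_inverse mult.commute)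

lemma vand:
  "finite F \<Longrightarrow> bnd N g \<Longrightarrow> (\<forall>x. x \<notin> F \<longrightarrow> (\<Sum>n\<le>N. s (x ^ n) (g n)) = 0) \<Longrightarrow> g n = 0"
proof (induction N arbitrary: g F n)
  case 0
  obtain x :: complex where "x \<notin> F" using "0.prems"(1) ex_new_if_finite infinite_UNIV_char_0 by blast
  with "0.prems" have "g 0 = 0" by auto
  with "0.prems"(2) show ?case by (cases n) (auto simp: bnd_def)
next
  case (Suc N)
  obtain a :: complex where a: "a \<notin> F" using Suc.prems(1) ex_new_if_finite infinite_UNIV_char_0 by blast
  define h where "h k = (\<Sum>n\<le>Suc N. if k < n then s (a ^ (n - Suc k)) (g n) else 0)" for k
  have hb: "bnd N h" by (auto simp: bnd_def h_def intro!: sum.neutral)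
  have key: "(\<Sum>n\<le>Suc N. s (x ^ n) (g n)) - (\<Sum>n\<le>Suc N. s (a ^ n) (g n))
      = s (x - a) (\<Sum>k\<le>N. s (x ^ k) (h k))" for x
  proof -
    have "s (x - a) (\<Sum>k\<le>N. s (x ^ k) (h k))
       = (\<Sum>k\<le>N. \<Sum>n\<le>Suc N. s ((x - a) * x ^ k) (if k < n then s (a ^ (n - Suc k)) (g n) else 0))"
      by (simp only: h_def scale_sum_right scale_scale)
    also have "\<dots> = (\<Sum>k\<le>N. \<Sum>n\<le>Suc N. if k < n then s ((x - a) * x ^ k * a ^ (n - Suc k)) (g n) else 0)"
      by (intro sum.cong refl) (simp add: mult.assoc)
    also have "\<dots> = (\<Sum>n\<le>Suc N. \<Sum>k\<le>N. if k < n then s ((x - a) * x ^ k * a ^ (n - Suc k)) (g n) else 0)"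
      by (rule sum.swap)
    also have "\<dots> = (\<Sum>n\<le>Suc N. s (\<Sum>k\<le>N. if k < n then (x - a) * x ^ k * a ^ (n - Suc k) else 0) (g n))"
      unfolding scale_sum_left by (intro sum.cong refl) simp
    also have "\<dots> = (\<Sum>n\<le>Suc N. s (x ^ n - a ^ n) (g n))"
    proof (rule sum.cong)
      fix n assume n: "n \<in> {..Suc N}"
      have "(\<Sum>k\<le>N. if k < n then (x - a) * x ^ k * a ^ (n - Suc k) else 0)
          = (\<Sum>k\<in>{k\<in>{..N}. k < n}. (x - a) * x ^ k * a ^ (n - Suc k))"
        by (rule sum.inter_filter[symmetric]) simp
      also have "{k\<in>{..N}. k < n} = {..<n}" using n by auto
      also have "(\<Sum>k<n. (x - a) * x ^ k * a ^ (n - Suc k)) = x ^ n - a ^ n"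
        unfolding power_diff_sumr2 sum_distrib_left by (intro sum.cong refl) (simp add: mult.assoc mult.left_commute)
      finally show "s (\<Sum>k\<le>N. if k < n then (x - a) * x ^ k * a ^ (n - Suc k) else 0) (g n) = s (x ^ n - a ^ n) (g n)"
        by simp
    qed simp
    also have "\<dots> = (\<Sum>n\<le>Suc N. s (x ^ n) (g n)) - (\<Sum>n\<le>Suc N. s (a ^ n) (g n))"
      by (simp only: scale_left_diff_distrib sum_subtractf)
    finally show ?thesis by (rule sym)
  qed
  have "\<forall>x. x \<notin> insert a F \<longrightarrow> (\<Sum>k\<le>N. s (x ^ k) (h k)) = 0"
  proof (intro allI impI)
    fix x assume "x \<notin> insert a F"
    then have "x - a \<noteq> 0" "x \<notin> F" "a \<notin> F" using a by auto
    then have "(\<Sum>n\<le>Suc N. s (x ^ n) (g n)) = 0" "(\<Sum>n\<le>Suc N. s (a ^ n) (g n)) = 0"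
      using Suc.prems(3) by blast+
    then have "s (x - a) (\<Sum>k\<le>N. s (x ^ k) (h k)) = 0" using key[of x] by simp
    then show "(\<Sum>k\<le>N. s (x ^ k) (h k)) = 0"
      using scale_cancel \<open>x - a \<noteq> 0\<close> by blast
  qed
  then have "h N = 0" by (rule Suc.IH[OF finite_insert[THEN iffD2, OF Suc.prems(1)] hb])
  moreover have "h N = g (Suc N)" by (simp add: h_def)
  ultimately have gS: "g (Suc N) = 0" by simp
  have gb: "bnd N g" unfolding bnd_def
  proof (intro allI impI)
    fix n assume "N < n"
    then have "n = Suc N \<or> Suc N < n" by auto
    then show "g n = 0" using gS Suc.prems(2) by (auto simp: bnd_def)
  qed
  have "\<forall>x. x \<notin> F \<longrightarrow> (\<Sum>n\<le>N. s (x ^ n) (g n)) = 0"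
  proof (intro allI impI)
    fix x assume "x \<notin> F"
    then have "(\<Sum>n\<le>Suc N. s (x ^ n) (g n)) = 0" using Suc.prems(3) by blast
    then show "(\<Sum>n\<le>N. s (x ^ n) (g n)) = 0" using gS by (simp only: sum.atMost_Suc) simp
  qed
  then show ?case by (rule Suc.IH[OF Suc.prems(1) gb])
qed

lemma uniq1: "bnd N g \<Longrightarrow> (\<And>x. ev1 s D g [:x:] = 0) \<Longrightarrow> g n = 0"
  using vand[of "{}" N g n] by (simp add: ev1_const)

lemma uniq1_eq: "bnd N g \<Longrightarrow> bnd N h \<Longrightarrow> (\<And>x. ev1 s D g [:x:] = ev1 s D h [:x:]) \<Longrightarrow> g = h"
proof -
  assume b: "bnd N g" "bnd N h" and e: "\<And>x. ev1 s D g [:x:] = ev1 s D h [:x:]"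
  have bd: "bnd N (\<lambda>n. g n - h n)" using b by (auto simp: bnd_def)
  have "g n - h n = 0" for n
    by (rule uniq1[OF bd]) (simp add: ev1_diff[OF b] e)
  then show "g = h" by auto
qed

end


lemma sum4swap: "(\<Sum>l\<in>A. \<Sum>m\<in>B. \<Sum>p\<in>C. \<Sum>q\<in>E. f l m p q) = (\<Sum>p\<in>C. \<Sum>q\<in>E. \<Sum>l\<in>A. \<Sum>m\<in>B. f l m p q)"
proof -
  have "(\<Sum>l\<in>A. \<Sum>m\<in>B. \<Sum>p\<in>C. \<Sum>q\<in>E. f l m p q) = (\<Sum>l\<in>A. \<Sum>p\<in>C. \<Sum>m\<in>B. \<Sum>q\<in>E. f l m p q)"
    by (intro sum.cong refl) (rule sum.swap)
  also have "\<dots> = (\<Sum>l\<in>A. \<Sum>p\<in>C. \<Sum>q\<in>E. \<Sum>m\<in>B. f l m p q)"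
    by (intro sum.cong refl) (rule sum.swap)
  also have "\<dots> = (\<Sum>p\<in>C. \<Sum>l\<in>A. \<Sum>q\<in>E. \<Sum>m\<in>B. f l m p q)"
    by (rule sum.swap)
  also have "\<dots> = (\<Sum>p\<in>C. \<Sum>q\<in>E. \<Sum>l\<in>A. \<Sum>m\<in>B. f l m p q)"
    by (intro sum.cong refl) (rule sum.swap)
  finally show ?thesis .
qed

lemma bnd2_row: "bnd2 N F \<Longrightarrow> bnd N (F l)"
  by (auto simp: bnd2_def bnd_def)

lemma bnd2_col: "bnd2 N F \<Longrightarrow> bnd N (\<lambda>l. F l m)"
  by (auto simp: bnd2_def bnd_def)

lemma bnd2_swap: "bnd2 N F \<Longrightarrow> bnd2 N (\<lambda>l m. F m l)"
  by (auto simp: bnd2_def)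

context cmod begin

lemma ev2_bnd: "bnd2 N F \<Longrightarrow> ev2 s D F P Q = (\<Sum>l\<le>N. \<Sum>m\<le>N. opD s D (P ^ l * Q ^ m) (F l m))"
proof -
  assume b: "bnd2 N F"
  have r: "ev1 s D (F l) Q = (\<Sum>m\<le>N. opD s D (Q ^ m) (F l m))" for l
    by (rule ev1_bnd[OF bnd2_row[OF b]])
  have rb: "bnd N (\<lambda>l. ev1 s D (F l) Q)"
    using b by (auto simp: bnd_def bnd2_def r)
  show ?thesis
    unfolding ev2_def by (simp only: ev1_bnd[OF rb]) (simp add: r opD_vsum opD_mult)
qed

lemma ev2_swap: "bnd2 N F \<Longrightarrow> ev2 s D (\<lambda>l m. F m l) P Q = ev2 s D F Q P"
proof -
  assume b: "bnd2 N F"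
  show ?thesis
    by (simp only: ev2_bnd[OF b] ev2_bnd[OF bnd2_swap[OF b]]) (subst sum.swap, simp add: mult.commute)
qed

lemma opD_hom_self': "lin s s f \<Longrightarrow> (\<And>v. f (D v) = D (f v)) \<Longrightarrow> f (opD s D r v) = opD s D r (f v)"
  by (rule opD_hom_self)

lemma bnd2_lin: "lin s s f \<Longrightarrow> bnd2 N F \<Longrightarrow> bnd2 N (\<lambda>l m. f (F l m))"
  using lin_zero by (fastforce simp: bnd2_def)

lemma ev2_lin: "lin s s f \<Longrightarrow> (\<And>v. f (D v) = D (f v)) \<Longrightarrow> bnd2 N F \<Longrightarrow>
   ev2 s D (\<lambda>l m. f (F l m)) P Q = f (ev2 s D F P Q)"
  by (simp add: ev2_bnd bnd2_lin lin_sum opD_hom_self)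

lemma ev2_add: "bnd2 N F \<Longrightarrow> bnd2 N G \<Longrightarrow> ev2 s D (\<lambda>l m. F l m + G l m) P Q = ev2 s D F P Q + ev2 s D G P Q"
proof -
  assume b: "bnd2 N F" "bnd2 N G"
  then have "bnd2 N (\<lambda>l m. F l m + G l m)" by (simp add: bnd2_def)
  then show ?thesis by (simp add: ev2_bnd[OF b(1)] ev2_bnd[OF b(2)] ev2_bnd opD_vadd sum.distrib)
qed

lemma ev2_diff: "bnd2 N F \<Longrightarrow> bnd2 N G \<Longrightarrow> ev2 s D (\<lambda>l m. F l m - G l m) P Q = ev2 s D F P Q - ev2 s D G P Q"
proof -
  assume b: "bnd2 N F" "bnd2 N G"
  then have "bnd2 N (\<lambda>l m. F l m - G l m)" by (simp add: bnd2_def)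
  then show ?thesis by (simp add: ev2_bnd[OF b(1)] ev2_bnd[OF b(2)] ev2_bnd opD_vdiff sum_subtractf)
qed

lemma ev2_sgnx: "bnd2 N F \<Longrightarrow> ev2 s D (\<lambda>l m. sgnx i j (F l m)) P Q = sgnx i j (ev2 s D F P Q)"
  by (rule ev2_lin[OF lin_sgnx]) (auto simp: sgnx_def lin_minus[OF lD])

lemma ev2_minus: "bnd2 N F \<Longrightarrow> ev2 s D (\<lambda>l m. - F l m) P Q = - ev2 s D F P Q"
  by (rule ev2_lin[OF lin_uminus]) (auto simp: lin_minus[OF lD])

lemma bnd2_sn2: "bnd2 N F \<Longrightarrow> bnd2 N (\<lambda>l m. subst_neg s D (F l) m)"
proof -
  assume b: "bnd2 N F"
  have "bnd N (subst_neg s D (F l))" for l by (rule sn_bnd[OF bnd2_row[OF b]])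
  moreover have "subst_neg s D (F l) m = 0" if "l > N" for l m
  proof -
    have "F l = (\<lambda>_. 0)" using b that by (auto simp: bnd2_def)
    then show ?thesis by (simp add: subst_neg_def)
  qed
  ultimately show ?thesis unfolding bnd2_def bnd_def
    by (metis)
qed

lemma bnd2_sn1: "bnd2 N F \<Longrightarrow> bnd2 N (\<lambda>l m. subst_neg s D (\<lambda>n. F n m) l)"
  by (drule bnd2_swap, drule bnd2_sn2, drule bnd2_swap) simp

lemma ev2_sn2: "bnd2 N F \<Longrightarrow> ev2 s D (\<lambda>l m. subst_neg s D (F l) m) P Q = ev2 s D F P (- Q - pX)"
proof -
  assume b: "bnd2 N F"
  have "ev1 s D (subst_neg s D (F l)) Q = ev1 s D (F l) (- Q - pX)" for l
    by (rule ev1_sn[OF bnd2_row[OF b]])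
  then show ?thesis unfolding ev2_def by simp
qed

lemma ev2_sn1: "bnd2 N F \<Longrightarrow> ev2 s D (\<lambda>l m. subst_neg s D (\<lambda>n. F n m) l) P Q = ev2 s D F (- P - pX) Q"
proof -
  assume b: "bnd2 N F"
  have "ev2 s D (\<lambda>l m. subst_neg s D (\<lambda>n. F n m) l) P Q
      = ev2 s D (\<lambda>m l. subst_neg s D (\<lambda>n. F n m) l) Q P"
    using ev2_swap[OF bnd2_sn1[OF b], of Q P] by simp
  also have "\<dots> = ev2 s D (\<lambda>m l. F l m) Q (- P - pX)"
    by (rule ev2_sn2[OF bnd2_swap[OF b]])
  also have "\<dots> = ev2 s D F (- P - pX) Q"
    by (rule ev2_swap[OF b])
  finally show ?thesis .
qed

lemma uniq2_eq: "bnd2 N F \<Longrightarrow> bnd2 N G \<Longrightarrow> (\<And>x y. ev2 s D F [:x:] [:y:] = ev2 s D G [:x:] [:y:]) \<Longrightarrow> F = G"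
proof -
  assume b: "bnd2 N F" "bnd2 N G" and e: "\<And>x y. ev2 s D F [:x:] [:y:] = ev2 s D G [:x:] [:y:]"
  define H where "H l m = F l m - G l m" for l m
  have hb: "bnd2 N H" using b by (auto simp: bnd2_def H_def)
  have e0: "ev2 s D H [:x:] [:y:] = 0" for x y
    unfolding H_def by (simp add: ev2_diff[OF b] e)
  have rowb: "bnd N (\<lambda>l. ev1 s D (H l) [:y:])" for y
    using hb by (auto simp: bnd_def bnd2_def ev1_def)
  have r0: "ev1 s D (H l) [:y:] = 0" for l y
    by (rule uniq1[OF rowb]) (use e0 in \<open>simp add: ev2_def\<close>)
  have "H l m = 0" for l m
    by (rule uniq1[OF bnd2_row[OF hb]]) (rule r0)
  then show "F = G" by (auto simp: H_def fun_eq_iff)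
qed

end


context cmod begin

lemma bnd2_ss: "bnd2 N c \<Longrightarrow> bnd2 (2 * N) (subst_sum s c)"
  unfolding bnd2_def subst_sum_def
proof (intro allI impI)
  fix l m assume c: "\<forall>l m. N < l \<or> N < m \<longrightarrow> c l m = 0" and lm: "2 * N < l \<or> 2 * N < m"
  show "(\<Sum>p\<le>l. s (of_nat ((l - p + m) choose m)) (c p (l - p + m))) = 0"
  proof (intro sum.neutral ballI)
    fix p assume "p \<in> {..l}"
    then have "p \<le> l" by simp
    then have "N < p \<or> N < l - p + m" using lm by linarith
    then show "s (of_nat ((l - p + m) choose m)) (c p (l - p + m)) = 0" using c by auto
  qed
qed

lemma opD_ofnat: "opD s D (X * of_nat n) v = opD s D X (s (of_nat n) v)"
  by (simp only: opD_mult of_nat_poly opD_const)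

lemma opD_if: "opD s D X (if b then s (of_nat n) v else 0) = opD s D (if b then X * of_nat n else 0) v"
  by (cases b) (simp_all add: opD_ofnat)

lemma ev2_ss: "bnd2 N c \<Longrightarrow> ev2 s D (subst_sum s c) P Q = ev2 s D c P (P + Q)"
proof -
  assume b: "bnd2 N c"
  define K where "K = 2 * N"
  have bK: "bnd2 K c" using b by (rule bnd2_mono) (simp add: K_def)
  have bS: "bnd2 K (subst_sum s c)" unfolding K_def by (rule bnd2_ss[OF b])
  have cz: "c p q = 0" if "N < p \<or> N < q" for p q using b that by (auto simp: bnd2_def)
  define W where "W p q = (\<Sum>l\<le>K. \<Sum>m\<le>K. if p \<le> l \<and> q = l - p + m then P ^ l * Q ^ m * of_nat (q choose m) else 0)" for p q
  have step1: "subst_sum s c l m = (\<Sum>p\<le>K. \<Sum>q\<le>K. if p \<le> l \<and> q = l - p + m then s (of_nat (q choose m)) (c p q) else 0)"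
    if lK: "l \<le> K" for l m
  proof -
    have "(\<Sum>p\<le>K. \<Sum>q\<le>K. if p \<le> l \<and> q = l - p + m then s (of_nat (q choose m)) (c p q) else 0)
        = (\<Sum>p\<le>K. if p \<le> l then (\<Sum>q\<le>K. if q = l - p + m then s (of_nat (q choose m)) (c p q) else 0) else 0)"
      by (intro sum.cong refl) auto
    also have "\<dots> = (\<Sum>p\<le>K. if p \<le> l then s (of_nat ((l - p + m) choose m)) (c p (l - p + m)) else 0)"
    proof (intro sum.cong refl)
      fix p assume "p \<in> {..K}"
      have "(\<Sum>q\<le>K. if q = l - p + m then s (of_nat (q choose m)) (c p q) else 0)
          = (if l - p + m \<in> {..K} then s (of_nat ((l - p + m) choose m)) (c p (l - p + m)) else 0)"
        by (rule sum.delta) simp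
      also have "\<dots> = s (of_nat ((l - p + m) choose m)) (c p (l - p + m))"
        using cz[of p "l - p + m"] by (auto simp: K_def)
      finally have eq: "(\<Sum>q\<le>K. if q = l - p + m then s (of_nat (q choose m)) (c p q) else 0) = s (of_nat ((l - p + m) choose m)) (c p (l - p + m))" .
      show "(if p \<le> l then (\<Sum>q\<le>K. if q = l - p + m then s (of_nat (q choose m)) (c p q) else 0) else 0)
          = (if p \<le> l then s (of_nat ((l - p + m) choose m)) (c p (l - p + m)) else 0)" by (simp only: eq)
    qed
    also have "\<dots> = (\<Sum>p\<in>{p\<in>{..K}. p \<le> l}. s (of_nat ((l - p + m) choose m)) (c p (l - p + m)))"
      by (rule sum.inter_filter[symmetric]) simp
    also have "{p\<in>{..K}. p \<le> l} = {..l}" using lK by auto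
    finally show ?thesis unfolding subst_sum_def by simp
  qed
  have "ev2 s D (subst_sum s c) P Q = (\<Sum>l\<le>K. \<Sum>m\<le>K. opD s D (P ^ l * Q ^ m) (subst_sum s c l m))"
    by (rule ev2_bnd[OF bS])
  also have "\<dots> = (\<Sum>l\<le>K. \<Sum>m\<le>K. \<Sum>p\<le>K. \<Sum>q\<le>K. opD s D (if p \<le> l \<and> q = l - p + m then P ^ l * Q ^ m * of_nat (q choose m) else 0) (c p q))"
    by (intro sum.cong refl) (simp only: atMost_iff step1 opD_vsum opD_if)
  also have "\<dots> = (\<Sum>p\<le>K. \<Sum>q\<le>K. \<Sum>l\<le>K. \<Sum>m\<le>K. opD s D (if p \<le> l \<and> q = l - p + m then P ^ l * Q ^ m * of_nat (q choose m) else 0) (c p q))"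
    by (rule sum4swap)
  also have "\<dots> = (\<Sum>p\<le>K. \<Sum>q\<le>K. opD s D (W p q) (c p q))"
    unfolding W_def by (simp only: opD_sum)
  also have "\<dots> = (\<Sum>p\<le>K. \<Sum>q\<le>K. opD s D (P ^ p * (P + Q) ^ q) (c p q))"
  proof (intro sum.cong refl)
    fix p q assume "p \<in> {..K}" "q \<in> {..K}"
    show "opD s D (W p q) (c p q) = opD s D (P ^ p * (P + Q) ^ q) (c p q)"
    proof (cases "N < p \<or> N < q")
      case True then show ?thesis using cz by simp
    next
      case False
      then have pq: "p \<le> N" "q \<le> N" by auto
      have "W p q = (\<Sum>m\<le>K. \<Sum>l\<le>K. if m \<le> q \<and> l = p + q - m then P ^ l * Q ^ m * of_nat (q choose m) else 0)"
        unfolding W_def by (subst sum.swap) (intro sum.cong refl if_cong, auto)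
      also have "\<dots> = (\<Sum>m\<le>K. if m \<le> q then P ^ (p + q - m) * Q ^ m * of_nat (q choose m) else 0)"
      proof (intro sum.cong refl)
        fix m assume "m \<in> {..K}"
        have "(\<Sum>l\<le>K. if m \<le> q \<and> l = p + q - m then P ^ l * Q ^ m * of_nat (q choose m) else 0)
            = (if m \<le> q then (\<Sum>l\<le>K. if l = p + q - m then P ^ l * Q ^ m * of_nat (q choose m) else 0) else 0)"
          by auto
        also have "\<dots> = (if m \<le> q then P ^ (p + q - m) * Q ^ m * of_nat (q choose m) else 0)"
          using pq by (subst sum.delta) (auto simp: K_def)
        finally show "(\<Sum>l\<le>K. if m \<le> q \<and> l = p + q - m then P ^ l * Q ^ m * of_nat (q choose m) else 0)
            = (if m \<le> q then P ^ (p + q - m) * Q ^ m * of_nat (q choose m) else 0)" .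
      qed
      also have "\<dots> = (\<Sum>m\<in>{m\<in>{..K}. m \<le> q}. P ^ (p + q - m) * Q ^ m * of_nat (q choose m))"
        by (rule sum.inter_filter[symmetric]) simp
      also have "{m\<in>{..K}. m \<le> q} = {..q}" using pq by (auto simp: K_def)
      also have "(\<Sum>m\<le>q. P ^ (p + q - m) * Q ^ m * of_nat (q choose m)) = P ^ p * (\<Sum>m\<le>q. of_nat (q choose m) * Q ^ m * P ^ (q - m))"
        unfolding sum_distrib_left
        by (intro sum.cong refl) (simp add: power_add[symmetric] ac_simps)
      also have "\<dots> = P ^ p * (Q + P) ^ q" by (simp only: binomial_ring)
      finally show ?thesis by (simp add: add.commute)
    qed
  qed
  also have "\<dots> = ev2 s D c P (P + Q)"
    by (rule ev2_bnd[OF bK, symmetric])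
  finally show ?thesis .
qed

end


locale gsp =
  fixes s :: "complex \<Rightarrow> 'a::ab_group_add \<Rightarrow> 'a" and G :: "bool \<Rightarrow> 'a set"
  assumes gs: "graded_space s G"
begin

lemma md: "module s" using gs by (simp add: graded_space_def)

lemma sub: "csubspace s (G i)" using gs by (cases i) (auto simp: graded_space_def)

lemma G0: "0 \<in> G i" using sub[of i] by (simp add: csubspace_def)
lemma Gadd: "x \<in> G i \<Longrightarrow> y \<in> G i \<Longrightarrow> x + y \<in> G i" using sub[of i] by (simp add: csubspace_def)
lemma Gscale: "x \<in> G i \<Longrightarrow> s c x \<in> G i" using sub[of i] by (simp add: csubspace_def)
lemma Gminus: "x \<in> G i \<Longrightarrow> - x \<in> G i"
  using Gscale[of x i "-1"] module.scale_minus_left[OF md, of 1 x] module.scale_one[OF md] by simp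
lemma Gdiff: "x \<in> G i \<Longrightarrow> y \<in> G i \<Longrightarrow> x - y \<in> G i"
  using Gadd Gminus by (metis diff_conv_add_uminus)
lemma Gsum: "(\<And>a. a \<in> A \<Longrightarrow> f a \<in> G i) \<Longrightarrow> sum f A \<in> G i"
  by (induction A rule: infinite_finite_induct) (auto simp: G0 Gadd)
lemma Gsgnx: "x \<in> G i \<Longrightarrow> sgnx a b x \<in> G i" by (simp add: sgnx_def Gminus)

lemma Ginter: "x \<in> G i \<Longrightarrow> x \<in> G (\<not> i) \<Longrightarrow> x = 0"
  using gs by (cases i) (auto simp: graded_space_def)

lemma decomp: "\<exists>y z. y \<in> G i \<and> z \<in> G (\<not> i) \<and> x = y + z"
proof -
  have "\<forall>x. \<exists>y\<in>G False. \<exists>z\<in>G True. x = y + z" using gs by (simp add: graded_space_def)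
  then obtain y z where "y \<in> G False" "z \<in> G True" "x = y + z" by blast
  then show ?thesis by (cases i) (auto simp: add.commute)
qed

lemma gproj_unique: "y \<in> G i \<Longrightarrow> x - y \<in> G (\<not> i) \<Longrightarrow> gproj G i x = y"
proof -
  assume y: "y \<in> G i" "x - y \<in> G (\<not> i)"
  have "\<exists>!y. y \<in> G i \<and> x - y \<in> G (\<not> i)"
  proof
    show "y \<in> G i \<and> x - y \<in> G (\<not> i)" using y by simp
  next
    fix y' assume y': "y' \<in> G i \<and> x - y' \<in> G (\<not> i)"
    have "y' - y \<in> G i" using y y' Gdiff by blast
    moreover have "y' - y \<in> G (\<not> i)" using Gdiff[of "x - y" "\<not> i" "x - y'"] y y' by simp
    ultimately show "y' = y" using Ginter by fastforce
  qed
  then show ?thesis unfolding gproj_def by (rule the1_equality) (use y in simp)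
qed

lemma gproj_ex: "gproj G i x \<in> G i \<and> x - gproj G i x \<in> G (\<not> i)"
proof -
  obtain y z where "y \<in> G i" "z \<in> G (\<not> i)" "x = y + z" using decomp by blast
  then have "gproj G i x = y" by (intro gproj_unique) auto
  then show ?thesis using \<open>y \<in> G i\<close> \<open>z \<in> G (\<not> i)\<close> \<open>x = y + z\<close> by simp
qed

lemma gproj_mem: "gproj G i x \<in> G i" using gproj_ex by blast

lemma gproj_id: "x \<in> G i \<Longrightarrow> gproj G i x = x"
  by (rule gproj_unique) (auto simp: G0)

lemma gproj_zero: "x \<in> G i \<Longrightarrow> gproj G (\<not> i) x = 0"
  by (rule gproj_unique) (auto simp: G0)

lemma gproj_zero': "x \<in> G i \<Longrightarrow> j \<noteq> i \<Longrightarrow> gproj G j x = 0"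
  using gproj_zero[of x i] by (cases j; cases i) auto

lemma gproj_add: "gproj G i (x + y) = gproj G i x + gproj G i y"
  apply (rule gproj_unique)
  using gproj_ex[of i x] gproj_ex[of i y] Gadd apply blast
  using Gadd[of "x - gproj G i x" "\<not> i" "y - gproj G i y"] gproj_ex[of i x] gproj_ex[of i y]
  by (simp add: algebra_simps)

lemma gproj_scale: "gproj G i (s c x) = s c (gproj G i x)"
  apply (rule gproj_unique)
  using gproj_ex[of i x] Gscale apply blast
  using Gscale[of "x - gproj G i x" "\<not> i" c] gproj_ex[of i x]
  by (simp add: module.scale_right_diff_distrib[OF md])

lemma lin_gproj: "lin s s (gproj G i)"
  by (simp add: lin_def gproj_add gproj_scale)

lemma gproj_sum2: "x = gproj G False x + gproj G True x"
proof -
  have "gproj G True x = x - gproj G False x"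
    by (rule gproj_unique) (use gproj_ex[of False x] in auto)
  then show ?thesis by simp
qed

end

lemma gproj_even:
  assumes "gsp s G" "gsp s' G'" "lin s s' f" "even_map G G' f"
  shows "f (gproj G i x) = gproj G' i (f x)"
proof -
  have "f (gproj G i x) \<in> G' i" using assms(4) gsp.gproj_mem[OF assms(1)] by (auto simp: even_map_def)
  moreover have "f x - f (gproj G i x) \<in> G' (\<not> i)"
    using assms(4) gsp.gproj_ex[OF assms(1), of i x] lin_diff[OF assms(3), of x "gproj G i x"]
    by (auto simp: even_map_def) (metis)
  ultimately show ?thesis by (intro gsp.gproj_unique[OF assms(2), symmetric])
qed

lemma inv_lin:
  assumes "bij f" "lin s s f"
  shows "lin s s (inv f)"
proof -
  have fi: "f (inv f x) = x" for x using assms(1) by (simp add: bij_is_surj surj_f_inv_f)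
  have if_: "inv f (f x) = x" for x using assms(1) by (simp add: bij_is_inj inv_f_f)
  show ?thesis unfolding lin_def
  proof (intro conjI allI)
    fix x y show "inv f (x + y) = inv f x + inv f y"
      by (metis fi if_ lin_add[OF assms(2)])
  next
    fix c x show "inv f (s c x) = s c (inv f x)"
      by (metis fi if_ lin_scale[OF assms(2)])
  qed
qed

lemma inv_comm:
  assumes "bij f" "\<And>x. f (g x) = g (f x)"
  shows "inv f (g x) = g (inv f x)"
proof -
  have fi: "f (inv f x) = x" for x using assms(1) by (simp add: bij_is_surj surj_f_inv_f)
  have if_: "inv f (f x) = x" for x using assms(1) by (simp add: bij_is_inj inv_f_f)
  show ?thesis by (metis fi if_ assms(2))
qed

lemma inv_even:
  assumes "gsp s G" "bij f" "lin s s f" "even_map G G f"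
  shows "even_map G G (inv f)"
  unfolding even_map_def
proof (intro allI ballI)
  fix i x assume x: "x \<in> G i"
  have fi: "f (inv f x) = x" using assms(2) by (simp add: bij_is_surj surj_f_inv_f)
  have "inv f x = gproj G i (inv f x)"
  proof -
    have "f (gproj G (\<not> i) (inv f x)) = gproj G (\<not> i) x"
      using gproj_even[OF assms(1) assms(1) assms(3) assms(4)] fi by metis
    also have "\<dots> = 0" using gsp.gproj_zero[OF assms(1) x] .
    finally have "gproj G (\<not> i) (inv f x) = 0"
      using assms(2) lin_zero[OF assms(3)] by (metis bij_is_inj injD)
    then show ?thesis using gsp.gproj_sum2[OF assms(1), of "inv f x"] by (cases i) auto
  qed
  then show "inv f x \<in> G i" using gsp.gproj_mem[OF assms(1)] by metis
qed


locale bh =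
  fixes sR :: "complex \<Rightarrow> 'r::ab_group_add \<Rightarrow> 'r" and GR :: "bool \<Rightarrow> 'r set"
    and DR \<alpha> \<beta> :: "'r \<Rightarrow> 'r" and brR :: "'r \<Rightarrow> 'r \<Rightarrow> nat \<Rightarrow> 'r"
    and sM :: "complex \<Rightarrow> 'm::ab_group_add \<Rightarrow> 'm" and GM :: "bool \<Rightarrow> 'm set"
    and DM \<phi> \<psi> :: "'m \<Rightarrow> 'm" and \<rho> :: "'r \<Rightarrow> 'm \<Rightarrow> nat \<Rightarrow> 'm" and T :: "'m \<Rightarrow> 'r"
  assumes LR: "bihom_lcsa sR GR DR brR \<alpha> \<beta>"
    and MOD: "bihom_conf_module sR GR DR brR \<alpha> \<beta> sM GM DM \<rho> \<phi> \<psi>" and bphi: "bij \<phi>" and bpsi: "bij \<psi>"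
    and OP: "O_operator sR GR DR brR \<alpha> \<beta> sM GM DM \<rho> \<phi> \<psi> T"
begin

lemma gM: "graded_space sM GM" using MOD by (simp add: bihom_conf_module_def)
lemma gR: "graded_space sR GR" using LR by (simp add: bihom_lcsa_def)
lemma lDM: "lin sM sM DM" using MOD by (simp add: bihom_conf_module_def)
lemma lDR: "lin sR sR DR" using LR by (simp add: bihom_lcsa_def)
lemma eDM: "even_map GM GM DM" using MOD by (simp add: bihom_conf_module_def)
lemma lphi: "lin sM sM \<phi>" using MOD by (simp add: bihom_conf_module_def)
lemma lpsi: "lin sM sM \<psi>" using MOD by (simp add: bihom_conf_module_def)
lemma ephi: "even_map GM GM \<phi>" using MOD by (simp add: bihom_conf_module_def)
lemma epsi: "even_map GM GM \<psi>" using MOD by (simp add: bihom_conf_module_def)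
lemma rho_la: "lin sR sM (\<lambda>a. \<rho> a v n)" using MOD by (simp add: bihom_conf_module_def)
lemma rho_lv: "lin sM sM (\<lambda>v. \<rho> a v n)" using MOD by (simp add: bihom_conf_module_def)
lemma rho_fin: "fin_supp (\<rho> a v)" using MOD by (simp add: bihom_conf_module_def)
lemma rho_gr: "a \<in> GR i \<Longrightarrow> v \<in> GM j \<Longrightarrow> \<rho> a v n \<in> GM (i \<noteq> j)"
  using MOD by (simp add: bihom_conf_module_def)
lemma rho_DR: "\<rho> (DR a) v = (\<lambda>n. - lam_mul (\<rho> a v) n)" using MOD by (simp add: bihom_conf_module_def)
lemma rho_DM: "\<rho> a (DM v) = (\<lambda>n. DM (\<rho> a v n) + lam_mul (\<rho> a v) n)" using MOD by (simp add: bihom_conf_module_def)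
lemma phipsi: "\<phi> (\<psi> x) = \<psi> (\<phi> x)" using MOD by (simp add: bihom_conf_module_def fun_eq_iff)
lemma psiD: "\<psi> (DM x) = DM (\<psi> x)" using MOD by (simp add: bihom_conf_module_def fun_eq_iff)
lemma phiD: "\<phi> (DM x) = DM (\<phi> x)" using MOD by (simp add: bihom_conf_module_def fun_eq_iff)
lemma phirho: "\<phi> (\<rho> a v n) = \<rho> (\<alpha> a) (\<phi> v) n" using MOD by (simp add: bihom_conf_module_def)
lemma psirho: "\<psi> (\<rho> a v n) = \<rho> (\<beta> a) (\<psi> v) n" using MOD by (simp add: bihom_conf_module_def)
lemma mj: "a \<in> GR i \<Longrightarrow> b \<in> GR j \<Longrightarrow>
    subst_sum sM (\<lambda>p q. \<rho> (brR (\<beta> a) b p) (\<psi> v) q) l m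
      = \<rho> (\<alpha> (\<beta> a)) (\<rho> b v m) l - sgnx i j (\<rho> (\<beta> b) (\<rho> (\<alpha> a) v l) m)"
  using MOD unfolding bihom_conf_module_def by blast

lemma lT: "lin sM sR T" using OP by (simp add: O_operator_def)
lemma TD: "T (DM x) = DR (T x)" using OP by (simp add: O_operator_def fun_eq_iff)
lemma eT: "even_map GM GR T" using OP by (simp add: O_operator_def)
lemma Tphi: "T (\<phi> x) = \<alpha> (T x)" using OP by (simp add: O_operator_def fun_eq_iff)
lemma Tpsi: "T (\<psi> x) = \<beta> (T x)" using OP by (simp add: O_operator_def fun_eq_iff)
lemma Top: "u \<in> GM i \<Longrightarrow> v \<in> GM j \<Longrightarrow> brR (T u) (T v) = (\<lambda>n. T (prodT_h sM DM \<rho> \<phi> \<psi> T i j u v n))"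
  using OP unfolding O_operator_def by blast

sublocale M: cmod sM DM
  using gM lDM by (simp add: cmod_def cmod_axioms_def graded_space_def)
sublocale R: cmod sR DR
  using gR lDR by (simp add: cmod_def cmod_axioms_def graded_space_def)
sublocale GMs: gsp sM GM using gM by (simp add: gsp_def)
sublocale GRs: gsp sR GR using gR by (simp add: gsp_def)

lemma iphi1[simp]: "inv \<phi> (\<phi> x) = x" using bphi by (simp add: bij_is_inj inv_f_f)
lemma iphi2[simp]: "\<phi> (inv \<phi> x) = x" using bphi by (simp add: bij_is_surj surj_f_inv_f)
lemma ipsi1[simp]: "inv \<psi> (\<psi> x) = x" using bpsi by (simp add: bij_is_inj inv_f_f)
lemma ipsi2[simp]: "\<psi> (inv \<psi> x) = x" using bpsi by (simp add: bij_is_surj surj_f_inv_f)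

lemma nf1[simp]: "\<psi> (\<phi> x) = \<phi> (\<psi> x)" by (simp add: phipsi)
lemma nf2[simp]: "\<psi> (inv \<phi> x) = inv \<phi> (\<psi> x)" by (metis iphi1 iphi2 phipsi)
lemma nf3[simp]: "inv \<psi> (\<phi> x) = \<phi> (inv \<psi> x)" by (metis ipsi1 ipsi2 phipsi)
lemma nf4[simp]: "inv \<psi> (inv \<phi> x) = inv \<phi> (inv \<psi> x)" by (metis ipsi1 ipsi2 nf2)

lemma liphi: "lin sM sM (inv \<phi>)" by (rule inv_lin[OF bphi lphi])
lemma lipsi: "lin sM sM (inv \<psi>)" by (rule inv_lin[OF bpsi lpsi])
lemma iphiD: "inv \<phi> (DM x) = DM (inv \<phi> x)" by (rule inv_comm[where g=DM, OF bphi phiD])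
lemma ipsiD: "inv \<psi> (DM x) = DM (inv \<psi> x)" by (rule inv_comm[where g=DM, OF bpsi psiD])
lemma eiphi: "even_map GM GM (inv \<phi>)" by (rule inv_even[OF _ bphi lphi ephi]) (simp add: gsp_def gM)
lemma eipsi: "even_map GM GM (inv \<psi>)" by (rule inv_even[OF _ bpsi lpsi epsi]) (simp add: gsp_def gM)

lemma phi_G: "x \<in> GM i \<Longrightarrow> \<phi> x \<in> GM i" using ephi by (simp add: even_map_def)
lemma psi_G: "x \<in> GM i \<Longrightarrow> \<psi> x \<in> GM i" using epsi by (simp add: even_map_def)
lemma iphi_G: "x \<in> GM i \<Longrightarrow> inv \<phi> x \<in> GM i" using eiphi by (simp add: even_map_def)
lemma ipsi_G: "x \<in> GM i \<Longrightarrow> inv \<psi> x \<in> GM i" using eipsi by (simp add: even_map_def)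
lemma DM_G: "x \<in> GM i \<Longrightarrow> DM x \<in> GM i" using eDM by (simp add: even_map_def)
lemma T_G: "x \<in> GM i \<Longrightarrow> T x \<in> GR i" using eT by (simp add: even_map_def)

lemma T0[simp]: "T 0 = 0" using lT lin_zero by blast
lemma rho0a[simp]: "\<rho> 0 v n = 0" using rho_la[of v n] lin_zero by blast
lemma rho0v[simp]: "\<rho> a 0 n = 0" using rho_lv[of a n] lin_zero by blast
lemma phi0[simp]: "\<phi> 0 = 0" using lphi lin_zero by blast
lemma psi0[simp]: "\<psi> 0 = 0" using lpsi lin_zero by blast
lemma iphi0[simp]: "inv \<phi> 0 = 0" using liphi lin_zero by blast
lemma ipsi0[simp]: "inv \<psi> 0 = 0" using lipsi lin_zero by blast

lemma rho_add_v: "\<rho> a (x + y) n = \<rho> a x n + \<rho> a y n" using rho_lv lin_add by blast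
lemma rho_diff_v: "\<rho> a (x - y) n = \<rho> a x n - \<rho> a y n" using rho_lv lin_diff by blast
lemma rho_sgnx_v: "\<rho> a (sgnx i j x) n = sgnx i j (\<rho> a x n)"
  by (simp add: sgnx_def lin_minus[OF rho_lv])
lemma rho_sum_v: "\<rho> a (sum f A) n = (\<Sum>x\<in>A. \<rho> a (f x) n)" using rho_lv lin_sum by blast
lemma rho_add_a: "\<rho> (a + b) v n = \<rho> a v n + \<rho> b v n" using rho_la lin_add by blast
lemma rho_scale_a: "\<rho> (sR c a) v n = sM c (\<rho> a v n)" using rho_la lin_scale by blast
lemma rho_scale_v: "\<rho> a (sM c v) n = sM c (\<rho> a v n)" using rho_lv lin_scale by blast

lemma sn_zero[simp]: "subst_neg sM DM (\<lambda>n. 0) = (\<lambda>k. 0)"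
  by (simp add: subst_neg_def fun_eq_iff)

lemma sn_zero'[simp]: "subst_neg sM DM (\<lambda>n. 0) k = 0"
  by simp

end


lemma fs_common: "fin_supp g \<Longrightarrow> fin_supp h \<Longrightarrow> \<exists>N. bnd N g \<and> bnd N h"
proof -
  assume "fin_supp g" "fin_supp h"
  then obtain N1 N2 where "bnd N1 g" "bnd N2 h" by (auto simp: fin_supp_bnd)
  then have "bnd (max N1 N2) g" "bnd (max N1 N2) h" by (auto intro: bnd_mono)
  then show ?thesis by blast
qed
lemma fs_add: "fin_supp (g :: nat \<Rightarrow> 'a::ab_group_add) \<Longrightarrow> fin_supp h \<Longrightarrow> fin_supp (\<lambda>n. g n + h n)"
proof -
  assume "fin_supp g" "fin_supp h"
  then obtain N where "bnd N g" "bnd N h" using fs_common by blast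
  then have "bnd N (\<lambda>n. g n + h n)" by (simp add: bnd_def)
  then show ?thesis by (auto simp: fin_supp_bnd)
qed
lemma fs_diff: "fin_supp (g :: nat \<Rightarrow> 'a::ab_group_add) \<Longrightarrow> fin_supp h \<Longrightarrow> fin_supp (\<lambda>n. g n - h n)"
proof -
  assume "fin_supp g" "fin_supp h"
  then obtain N where "bnd N g" "bnd N h" using fs_common by blast
  then have "bnd N (\<lambda>n. g n - h n)" by (simp add: bnd_def)
  then show ?thesis by (auto simp: fin_supp_bnd)
qed
lemma fs_map: "f 0 = 0 \<Longrightarrow> fin_supp g \<Longrightarrow> fin_supp (\<lambda>n. f (g n))"
proof -
  assume "f 0 = 0" "fin_supp g"
  then obtain N where "bnd N g" by (auto simp: fin_supp_bnd)
  then have "bnd N (\<lambda>n. f (g n))" using \<open>f 0 = 0\<close> by (simp add: bnd_def)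
  then show ?thesis by (auto simp: fin_supp_bnd)
qed
lemma fs_sgnx: "fin_supp (g :: nat \<Rightarrow> 'a::ab_group_add) \<Longrightarrow> fin_supp (\<lambda>n. sgnx i j (g n))"
  by (rule fs_map) (auto simp: sgnx_def)
lemma fs_lam: "fin_supp g \<Longrightarrow> fin_supp (lam_mul g)"
proof -
  assume "fin_supp g"
  then obtain N where "bnd N g" by (auto simp: fin_supp_bnd)
  then have "bnd (Suc N) (lam_mul g)" by (simp add: bnd_def lam_mul_def)
  then show ?thesis by (auto simp: fin_supp_bnd)
qed

context cmod begin

lemma sn_fs: "fin_supp g \<Longrightarrow> fin_supp (subst_neg s D g)"
  using sn_bnd by (auto simp: fin_supp_bnd)

lemma sn_lin: "fin_supp g \<Longrightarrow> lin s s f \<Longrightarrow> (\<And>v. f (D v) = D (f v)) \<Longrightarrow>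
    f (subst_neg s D g k) = subst_neg s D (\<lambda>n. f (g n)) k"
proof -
  assume g: "fin_supp g" and f: "lin s s f" "\<And>v. f (D v) = D (f v)"
  obtain N where b: "bnd N g" using g by (auto simp: fin_supp_bnd)
  have b2: "bnd N (\<lambda>n. f (g n))" by (rule bnd_lin[OF f(1) b])
  show ?thesis
    by (simp add: sn_bnd_eq[OF b] sn_bnd_eq[OF b2] lin_sum[OF f(1)] opD_hom_self[OF f])
qed

lemma sn_add: "fin_supp g \<Longrightarrow> fin_supp h \<Longrightarrow>
    subst_neg s D (\<lambda>n. g n + h n) k = subst_neg s D g k + subst_neg s D h k"
proof -
  assume "fin_supp g" "fin_supp h"
  then obtain N where b: "bnd N g" "bnd N h" using fs_common by blast
  then have b2: "bnd N (\<lambda>n. g n + h n)" by (auto simp: bnd_def)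
  show ?thesis by (simp add: sn_bnd_eq[OF b(1)] sn_bnd_eq[OF b(2)] sn_bnd_eq[OF b2] opD_vadd sum.distrib)
qed

lemma sn_diff: "fin_supp g \<Longrightarrow> fin_supp h \<Longrightarrow>
    subst_neg s D (\<lambda>n. g n - h n) k = subst_neg s D g k - subst_neg s D h k"
proof -
  assume "fin_supp g" "fin_supp h"
  then obtain N where b: "bnd N g" "bnd N h" using fs_common by blast
  then have b2: "bnd N (\<lambda>n. g n - h n)" by (auto simp: bnd_def)
  show ?thesis by (simp add: sn_bnd_eq[OF b(1)] sn_bnd_eq[OF b(2)] sn_bnd_eq[OF b2] opD_vdiff sum_subtractf)
qed

lemma sn_sgnx: "fin_supp g \<Longrightarrow> sgnx i j (subst_neg s D g k) = subst_neg s D (\<lambda>n. sgnx i j (g n)) k"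
  by (rule sn_lin[OF _ lin_sgnx]) (auto simp: sgnx_def lin_minus[OF lD])

lemma ev1_add_fs: "fin_supp g \<Longrightarrow> fin_supp h \<Longrightarrow> ev1 s D (\<lambda>n. g n + h n) P = ev1 s D g P + ev1 s D h P"
  using fs_common ev1_add by blast
lemma ev1_diff_fs: "fin_supp g \<Longrightarrow> fin_supp h \<Longrightarrow> ev1 s D (\<lambda>n. g n - h n) P = ev1 s D g P - ev1 s D h P"
  using fs_common ev1_diff by blast
lemma ev1_lin_fs: "lin s s f \<Longrightarrow> (\<And>v. f (D v) = D (f v)) \<Longrightarrow> fin_supp g \<Longrightarrow>
   ev1 s D (\<lambda>n. f (g n)) P = f (ev1 s D g P)"
  using ev1_lin by (auto simp: fin_supp_bnd)
lemma ev1_sn_fs: "fin_supp g \<Longrightarrow> ev1 s D (subst_neg s D g) P = ev1 s D g (- P - pX)"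
  using ev1_sn by (auto simp: fin_supp_bnd)
lemma ev1_lam_fs: "fin_supp g \<Longrightarrow> ev1 s D (lam_mul g) P = opD s D P (ev1 s D g P)"
  using ev1_lam by (auto simp: fin_supp_bnd)
lemma ev1_D_fs: "fin_supp g \<Longrightarrow> ev1 s D (\<lambda>n. D (g n)) P = D (ev1 s D g P)"
  by (rule ev1_lin_fs[OF lD]) auto
lemma ev1_minus_fs: "fin_supp g \<Longrightarrow> ev1 s D (\<lambda>n. - g n) P = - ev1 s D g P"
  by (rule ev1_lin_fs[OF lin_uminus]) (auto simp: lin_minus[OF lD])
lemma ev1_sgnx_fs: "fin_supp g \<Longrightarrow> ev1 s D (\<lambda>n. sgnx i j (g n)) P = sgnx i j (ev1 s D g P)"
  by (rule ev1_lin_fs[OF lin_sgnx]) (auto simp: sgnx_def lin_minus[OF lD])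
lemma uniq1_fs: "fin_supp g \<Longrightarrow> fin_supp h \<Longrightarrow> (\<And>x. ev1 s D g [:x:] = ev1 s D h [:x:]) \<Longrightarrow> g = h"
  using fs_common uniq1_eq by metis

end

context bh begin

abbreviation "pT \<equiv> prodT_h sM DM \<rho> \<phi> \<psi> T"
abbreviation "PT \<equiv> prodT sM GM DM \<rho> \<phi> \<psi> T"
abbreviation "snM \<equiv> subst_neg sM DM"

lemma pT_def': "pT i j u v n = \<rho> (T u) v n - sgnx i j (snM (\<rho> (T (inv \<phi> (\<psi> v))) (\<phi> (inv \<psi> u))) n)"
  by (simp add: prodT_h_def)

lemma rho0v_fun[simp]: "\<rho> a 0 = (\<lambda>n. 0)" by (simp add: fun_eq_iff)
lemma rho0a_fun[simp]: "\<rho> 0 v = (\<lambda>n. 0)" by (simp add: fun_eq_iff)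

lemma pT_zero1[simp]: "pT i j 0 v n = 0"
  by (simp add: pT_def' sgnx_def)
lemma pT_zero2[simp]: "pT i j u 0 n = 0"
  by (simp add: pT_def' sgnx_def)

lemma pT_fin: "fin_supp (pT i j u v)"
  unfolding prodT_h_def
  by (intro fs_diff rho_fin fs_sgnx M.sn_fs)

lemma PT_hom: "u \<in> GM i \<Longrightarrow> v \<in> GM j \<Longrightarrow> PT u v n = pT i j u v n"
  unfolding prodT_def UNIV_bool
  by (cases i; cases j) (simp_all add: GMs.gproj_id GMs.gproj_zero')

lemma PT_fin: "fin_supp (PT u v)"
proof -
  have "PT u v = (\<lambda>n. (pT False False (gproj GM False u) (gproj GM False v) n + pT False True (gproj GM False u) (gproj GM True v) n)
      + (pT True False (gproj GM True u) (gproj GM False v) n + pT True True (gproj GM True u) (gproj GM True v) n))"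
    by (simp add: prodT_def UNIV_bool fun_eq_iff)
  then show ?thesis by (simp add: fs_add pT_fin)
qed

lemma Dk_G: "x \<in> GM i \<Longrightarrow> (DM ^^ k) x \<in> GM i"
  by (induction k) (auto simp: DM_G)

lemma PT_gr: "u \<in> GM i \<Longrightarrow> v \<in> GM j \<Longrightarrow> PT u v n \<in> GM (i \<noteq> j)"
proof -
  assume u: "u \<in> GM i" and v: "v \<in> GM j"
  have a: "\<rho> (T u) v n \<in> GM (i \<noteq> j)" by (rule rho_gr[OF T_G[OF u] v])
  have "\<rho> (T (inv \<phi> (\<psi> v))) (\<phi> (inv \<psi> u)) n' \<in> GM (i \<noteq> j)" for n'
    using rho_gr[OF T_G[OF iphi_G[OF psi_G[OF v]]] phi_G[OF ipsi_G[OF u]], of n'] by (cases i; cases j) auto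
  then have b: "snM (\<rho> (T (inv \<phi> (\<psi> v))) (\<phi> (inv \<psi> u))) n \<in> GM (i \<noteq> j)"
    unfolding subst_neg_def
    by (intro GMs.Gsum GMs.Gscale Dk_G) simp
  show ?thesis unfolding PT_hom[OF u v] pT_def'
    by (intro GMs.Gdiff a GMs.Gsgnx b)
qed

end


context cmod begin

lemma ev1_sn_sn: "fin_supp g \<Longrightarrow> subst_neg s D (subst_neg s D g) = g"
proof -
  assume g: "fin_supp g"
  show ?thesis
  proof (rule uniq1_fs[OF sn_fs[OF sn_fs[OF g]] g])
    fix x
    show "ev1 s D (subst_neg s D (subst_neg s D g)) [:x:] = ev1 s D g [:x:]"
      by (simp add: ev1_sn_fs sn_fs g)
  qed
qed

lemma sn_Dlam: "fin_supp g \<Longrightarrow> subst_neg s D (\<lambda>n. D (g n) + lam_mul g n) = (\<lambda>k. - lam_mul (subst_neg s D g) k)"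
proof -
  assume g: "fin_supp g"
  have f1: "fin_supp (\<lambda>n. D (g n) + lam_mul g n)"
    by (intro fs_add fs_map[of D] fs_lam g) simp
  have f2: "fin_supp (\<lambda>k. - lam_mul (subst_neg s D g) k)"
    by (intro fs_map[of uminus] fs_lam sn_fs g) simp
  show ?thesis
  proof (rule uniq1_fs[OF sn_fs[OF f1] f2])
    fix x
    have "ev1 s D (subst_neg s D (\<lambda>n. D (g n) + lam_mul g n)) [:x:]
        = D (ev1 s D g (- [:x:] - pX)) + opD s D (- [:x:] - pX) (ev1 s D g (- [:x:] - pX))"
      by (simp add: ev1_sn_fs f1 ev1_add_fs fs_map[of D] fs_lam g ev1_D_fs ev1_lam_fs)
    also have "\<dots> = opD s D (pX + (- [:x:] - pX)) (ev1 s D g (- [:x:] - pX))"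
      by (simp only: opD_add opD_X)
    also have "\<dots> = - opD s D [:x:] (ev1 s D g (- [:x:] - pX))"
    proof -
      have e: "pX + (- [:x:] - pX) = - [:x:]" by simp
      show ?thesis by (simp only: e opD_minus)
    qed
    also have "\<dots> = ev1 s D (\<lambda>k. - lam_mul (subst_neg s D g) k) [:x:]"
      by (simp add: ev1_minus_fs fs_lam sn_fs g ev1_lam_fs ev1_sn_fs)
    finally show "ev1 s D (subst_neg s D (\<lambda>n. D (g n) + lam_mul g n)) [:x:] = ev1 s D (\<lambda>k. - lam_mul (subst_neg s D g) k) [:x:]" .
  qed
qed

lemma sn_mlam: "fin_supp g \<Longrightarrow> subst_neg s D (\<lambda>n. - lam_mul g n) = (\<lambda>k. D (subst_neg s D g k) + lam_mul (subst_neg s D g) k)"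
proof -
  assume g: "fin_supp g"
  have f1: "fin_supp (\<lambda>n. - lam_mul g n)"
    by (intro fs_map[of uminus] fs_lam g) simp
  have f2: "fin_supp (\<lambda>k. D (subst_neg s D g k) + lam_mul (subst_neg s D g) k)"
    by (intro fs_add fs_map[of D] fs_lam sn_fs g) simp
  show ?thesis
  proof (rule uniq1_fs[OF sn_fs[OF f1] f2])
    fix x
    have "ev1 s D (subst_neg s D (\<lambda>n. - lam_mul g n)) [:x:]
        = - opD s D (- [:x:] - pX) (ev1 s D g (- [:x:] - pX))"
      by (simp add: ev1_sn_fs f1 ev1_minus_fs fs_lam g ev1_lam_fs)
    also have "\<dots> = opD s D (pX + [:x:]) (ev1 s D g (- [:x:] - pX))"
    proof -
      have e: "pX + [:x:] = - (- [:x:] - pX)" by simp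
      show ?thesis by (simp only: e opD_minus)
    qed
    also have "\<dots> = D (ev1 s D g (- [:x:] - pX)) + opD s D [:x:] (ev1 s D g (- [:x:] - pX))"
      by (simp only: opD_add opD_X)
    also have "\<dots> = ev1 s D (\<lambda>k. D (subst_neg s D g k) + lam_mul (subst_neg s D g) k) [:x:]"
      by (simp add: ev1_add_fs fs_map[of D] fs_lam sn_fs g ev1_D_fs ev1_lam_fs ev1_sn_fs)
    finally show "ev1 s D (subst_neg s D (\<lambda>n. - lam_mul g n)) [:x:] = ev1 s D (\<lambda>k. D (subst_neg s D g k) + lam_mul (subst_neg s D g) k) [:x:]" .
  qed
qed

end

context bh begin

lemma rho_add_v_fun: "\<rho> a (x + y) = (\<lambda>n. \<rho> a x n + \<rho> a y n)" by (simp add: fun_eq_iff rho_add_v)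
lemma rho_add_a_fun: "\<rho> (a + b) v = (\<lambda>n. \<rho> a v n + \<rho> b v n)" by (simp add: fun_eq_iff rho_add_a)
lemma rho_scale_a_fun: "\<rho> (sR c a) v = (\<lambda>n. sM c (\<rho> a v n))" by (simp add: fun_eq_iff rho_scale_a)
lemma rho_scale_v_fun: "\<rho> a (sM c v) = (\<lambda>n. sM c (\<rho> a v n))" by (simp add: fun_eq_iff rho_scale_v)

lemma sgnx_add: "sgnx i j (x + y) = sgnx i j x + sgnx i j (y :: 'a::ab_group_add)"
  by (simp add: sgnx_def)
lemma sgnx_scale: "sgnx i j (sM c x) = sM c (sgnx i j x)"
  by (simp add: sgnx_def)
lemma sgnx_diff: "sgnx i j (x - y) = sgnx i j x - sgnx i j (y :: 'a::ab_group_add)"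
  by (simp add: sgnx_def)

lemma snM_scale: "snM (\<lambda>n. sM c (g n)) k = sM c (snM g k)" if "fin_supp g"
  using M.sn_lin[OF that M.lin_s, of c] M.D_scale by simp

lemma pT_add1: "pT i j (u + u') v n = pT i j u v n + pT i j u' v n"
  by (simp add: pT_def' lin_add[OF lT] rho_add_a lin_add[OF lipsi] lin_add[OF lphi]
      rho_add_v_fun M.sn_add rho_fin sgnx_add)
lemma pT_add2: "pT i j u (v + v') n = pT i j u v n + pT i j u v' n"
  by (simp add: pT_def' lin_add[OF lT] rho_add_v lin_add[OF liphi] lin_add[OF lpsi]
      rho_add_a_fun M.sn_add rho_fin sgnx_add)
lemma pT_scale1: "pT i j (sM c u) v n = sM c (pT i j u v n)"
  by (simp add: pT_def' lin_scale[OF lT] rho_scale_a lin_scale[OF lipsi] lin_scale[OF lphi]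
      rho_scale_v_fun snM_scale rho_fin sgnx_scale M.scale_right_diff_distrib)
lemma pT_scale2: "pT i j u (sM c v) n = sM c (pT i j u v n)"
  by (simp add: pT_def' lin_scale[OF lT] rho_scale_v lin_scale[OF liphi] lin_scale[OF lpsi]
      rho_scale_a_fun snM_scale rho_fin sgnx_scale M.scale_right_diff_distrib)

lemma PT_add1: "PT (u + u') v n = PT u v n + PT u' v n"
  by (simp add: prodT_def GMs.gproj_add pT_add1 sum.distrib)
lemma PT_add2: "PT u (v + v') n = PT u v n + PT u v' n"
  by (simp add: prodT_def GMs.gproj_add pT_add2 sum.distrib)
lemma PT_scale1: "PT (sM c u) v n = sM c (PT u v n)"
  by (simp add: prodT_def GMs.gproj_scale pT_scale1 M.scale_sum_right)
lemma PT_scale2: "PT u (sM c v) n = sM c (PT u v n)"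
  by (simp add: prodT_def GMs.gproj_scale pT_scale2 M.scale_sum_right)

lemma phirhoT: "\<phi> (\<rho> (T x) v n) = \<rho> (T (\<phi> x)) (\<phi> v) n" by (simp add: phirho Tphi)
lemma psirhoT: "\<psi> (\<rho> (T x) v n) = \<rho> (T (\<psi> x)) (\<psi> v) n" by (simp add: psirho Tpsi)

lemma phi_sgnx: "\<phi> (sgnx i j x) = sgnx i j (\<phi> x)" by (simp add: sgnx_def lin_minus[OF lphi])
lemma psi_sgnx: "\<psi> (sgnx i j x) = sgnx i j (\<psi> x)" by (simp add: sgnx_def lin_minus[OF lpsi])

lemma phi_sn: "fin_supp g \<Longrightarrow> \<phi> (snM g k) = snM (\<lambda>n. \<phi> (g n)) k"
  by (rule M.sn_lin[OF _ lphi phiD])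
lemma psi_sn: "fin_supp g \<Longrightarrow> \<psi> (snM g k) = snM (\<lambda>n. \<psi> (g n)) k"
  by (rule M.sn_lin[OF _ lpsi psiD])

lemma phi_pT: "\<phi> (pT i j u v n) = pT i j (\<phi> u) (\<phi> v) n"
  by (simp add: pT_def' lin_diff[OF lphi] phirhoT phi_sgnx phi_sn rho_fin)
lemma psi_pT: "\<psi> (pT i j u v n) = pT i j (\<psi> u) (\<psi> v) n"
  by (simp add: pT_def' lin_diff[OF lpsi] psirhoT psi_sgnx psi_sn rho_fin)

lemma gsM: "gsp sM GM" by (simp add: gsp_def gM)

lemma phi_gproj: "\<phi> (gproj GM i x) = gproj GM i (\<phi> x)" by (rule gproj_even[OF gsM gsM lphi ephi])
lemma psi_gproj: "\<psi> (gproj GM i x) = gproj GM i (\<psi> x)" by (rule gproj_even[OF gsM gsM lpsi epsi])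
lemma DM_gproj: "DM (gproj GM i x) = gproj GM i (DM x)" by (rule gproj_even[OF gsM gsM lDM eDM])

lemma phi_PT: "\<phi> (PT u v n) = PT (\<phi> u) (\<phi> v) n"
  by (simp add: prodT_def lin_sum[OF lphi] phi_pT phi_gproj)
lemma psi_PT: "\<psi> (PT u v n) = PT (\<psi> u) (\<psi> v) n"
  by (simp add: prodT_def lin_sum[OF lpsi] psi_pT psi_gproj)
lemma iphi_PT: "inv \<phi> (PT u v n) = PT (inv \<phi> u) (inv \<phi> v) n"
  by (metis iphi1 iphi2 phi_PT)
lemma ipsi_PT: "inv \<psi> (PT u v n) = PT (inv \<psi> u) (inv \<psi> v) n"
  by (metis ipsi1 ipsi2 psi_PT)

lemma lam_diff: "lam_mul (\<lambda>n. f n - (g n :: 'a::ab_group_add)) k = lam_mul f k - lam_mul g k"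
  by (simp add: lam_mul_def)
lemma lam_sgnx: "lam_mul (\<lambda>n. sgnx i j (f n :: 'a::ab_group_add)) k = sgnx i j (lam_mul f k)"
  by (simp add: lam_mul_def sgnx_def)
lemma lam_sum: "lam_mul (\<lambda>n. \<Sum>x\<in>A. (f x n :: 'a::ab_group_add)) k = (\<Sum>x\<in>A. lam_mul (f x) k)"
  by (simp add: lam_mul_def)

lemma pT_fun: "pT i j u v = (\<lambda>n. \<rho> (T u) v n - sgnx i j (snM (\<rho> (T (inv \<phi> (\<psi> v))) (\<phi> (inv \<psi> u))) n))"
  by (simp add: fun_eq_iff pT_def')

lemma pT_D1: "pT i j (DM u) v n = - lam_mul (pT i j u v) n"
proof -
  have "\<phi> (inv \<psi> (DM u)) = DM (\<phi> (inv \<psi> u))" by (simp add: ipsiD phiD)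
  then show ?thesis
    by (simp add: pT_fun TD rho_DR rho_DM M.sn_Dlam rho_fin lam_diff lam_sgnx)
       (simp add: sgnx_def lam_mul_def)
qed

lemma pT_D2: "pT i j u (DM v) n = DM (pT i j u v n) + lam_mul (pT i j u v) n"
proof -
  have "T (inv \<phi> (\<psi> (DM v))) = DR (T (inv \<phi> (\<psi> v)))" by (simp add: psiD iphiD TD)
  then show ?thesis
    by (simp add: pT_fun rho_DR rho_DM M.sn_mlam rho_fin lam_diff lam_sgnx lin_diff[OF lDM])
       (simp add: sgnx_def lam_mul_def lin_minus[OF lDM] algebra_simps)
qed

lemma PT_D1: "PT (DM u) v = (\<lambda>n. - lam_mul (PT u v) n)"
  by (simp add: fun_eq_iff prodT_def DM_gproj[symmetric] pT_D1 lam_sum) (simp add: lam_mul_def prodT_def sum_negf)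

lemma PT_D2: "PT u (DM v) = (\<lambda>n. DM (PT u v n) + lam_mul (PT u v) n)"
  by (simp add: fun_eq_iff prodT_def DM_gproj[symmetric] pT_D2 lam_sum lin_sum[OF lDM] sum.distrib)
     (simp add: lam_mul_def prodT_def)

end


lemma fin2I:
  assumes "\<And>l. fin_supp (F l)" "\<And>l m. N < l \<Longrightarrow> F l m = 0"
  shows "fin2 F"
proof -
  have "finite (\<Union>l\<le>N. {m. F l m \<noteq> 0})" using assms(1) by (auto simp: fin_supp_def)
  then obtain B where B: "\<forall>m\<in>(\<Union>l\<le>N. {m. F l m \<noteq> 0}). m \<le> B"
    using finite_nat_set_iff_bounded_le by blast
  have "bnd2 (max N B) F"
    unfolding bnd2_def
  proof (intro allI impI)
    fix l m assume "max N B < l \<or> max N B < m"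
    then show "F l m = 0"
    proof
      assume "max N B < l" then show ?thesis using assms(2) by simp
    next
      assume m: "max N B < m"
      show ?thesis
      proof (cases "l \<le> N")
        case True
        then show ?thesis using B m by fastforce
      next
        case False then show ?thesis using assms(2) by simp
      qed
    qed
  qed
  then show ?thesis by (auto simp: fin2_def)
qed

lemma fin2_swap: "fin2 F \<Longrightarrow> fin2 (\<lambda>l m. F m l)"
  unfolding fin2_def by (erule exE) (rule exI, erule bnd2_swap)

lemma fin2_common: "fin2 F \<Longrightarrow> fin2 G \<Longrightarrow> \<exists>N. bnd2 N F \<and> bnd2 N G"
proof -
  assume "fin2 F" "fin2 G"
  then obtain N1 N2 where "bnd2 N1 F" "bnd2 N2 G" by (auto simp: fin2_def)
  then have "bnd2 (max N1 N2) F" "bnd2 (max N1 N2) G" by (auto intro: bnd2_mono)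
  then show ?thesis by blast
qed

lemma fin2_add: "fin2 F \<Longrightarrow> fin2 G \<Longrightarrow> fin2 (\<lambda>l m. F l m + (G l m :: 'a::ab_group_add))"
proof -
  assume "fin2 F" "fin2 G"
  then obtain N where "bnd2 N F" "bnd2 N G" using fin2_common by blast
  then have "bnd2 N (\<lambda>l m. F l m + G l m)" by (simp add: bnd2_def)
  then show ?thesis by (auto simp: fin2_def)
qed
lemma fin2_diff: "fin2 F \<Longrightarrow> fin2 G \<Longrightarrow> fin2 (\<lambda>l m. F l m - (G l m :: 'a::ab_group_add))"
proof -
  assume "fin2 F" "fin2 G"
  then obtain N where "bnd2 N F" "bnd2 N G" using fin2_common by blast
  then have "bnd2 N (\<lambda>l m. F l m - G l m)" by (simp add: bnd2_def)
  then show ?thesis by (auto simp: fin2_def)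
qed
lemma fin2_sgnx: "fin2 F \<Longrightarrow> fin2 (\<lambda>l m. sgnx i j (F l m :: 'a::ab_group_add))"
proof -
  assume "fin2 F"
  then obtain N where "bnd2 N F" by (auto simp: fin2_def)
  then have "bnd2 N (\<lambda>l m. sgnx i j (F l m))" by (simp add: bnd2_def sgnx_def)
  then show ?thesis by (auto simp: fin2_def)
qed

context cmod begin

lemma ev2_swap_f: "fin2 F \<Longrightarrow> ev2 s D (\<lambda>l m. F m l) P Q = ev2 s D F Q P"
  using ev2_swap by (auto simp: fin2_def)
lemma ev2_add_f: "fin2 F \<Longrightarrow> fin2 G \<Longrightarrow> ev2 s D (\<lambda>l m. F l m + G l m) P Q = ev2 s D F P Q + ev2 s D G P Q"
  using fin2_common ev2_add by blast
lemma ev2_diff_f: "fin2 F \<Longrightarrow> fin2 G \<Longrightarrow> ev2 s D (\<lambda>l m. F l m - G l m) P Q = ev2 s D F P Q - ev2 s D G P Q"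
  using fin2_common ev2_diff by blast
lemma ev2_sgnx_f: "fin2 F \<Longrightarrow> ev2 s D (\<lambda>l m. sgnx i j (F l m)) P Q = sgnx i j (ev2 s D F P Q)"
  using ev2_sgnx by (auto simp: fin2_def)
lemma ev2_sn1_f: "fin2 F \<Longrightarrow> ev2 s D (\<lambda>l m. subst_neg s D (\<lambda>n. F n m) l) P Q = ev2 s D F (- P - pX) Q"
  using ev2_sn1 by (auto simp: fin2_def)
lemma ev2_sn2_f: "fin2 F \<Longrightarrow> ev2 s D (\<lambda>l m. subst_neg s D (F l) m) P Q = ev2 s D F P (- Q - pX)"
  using ev2_sn2 by (auto simp: fin2_def)
lemma ev2_ss_f: "fin2 c \<Longrightarrow> ev2 s D (subst_sum s c) P Q = ev2 s D c P (P + Q)"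
  using ev2_ss by (auto simp: fin2_def)
lemma fin2_sn1: "fin2 F \<Longrightarrow> fin2 (\<lambda>l m. subst_neg s D (\<lambda>n. F n m) l)"
  using bnd2_sn1 by (auto simp: fin2_def)
lemma fin2_sn2: "fin2 F \<Longrightarrow> fin2 (\<lambda>l m. subst_neg s D (F l) m)"
  using bnd2_sn2 by (auto simp: fin2_def)
lemma fin2_ss: "fin2 c \<Longrightarrow> fin2 (subst_sum s c)"
  using bnd2_ss by (auto simp: fin2_def)
lemma uniq2_f: "fin2 F \<Longrightarrow> fin2 G \<Longrightarrow> (\<And>x y. ev2 s D F [:x:] [:y:] = ev2 s D G [:x:] [:y:]) \<Longrightarrow> F = G"
  using fin2_common uniq2_eq by metis

lemma fs_sum: "finite A \<Longrightarrow> (\<And>n. n \<in> A \<Longrightarrow> fin_supp (g n)) \<Longrightarrow> fin_supp (\<lambda>l. \<Sum>n\<in>A. (g n l :: 'a))"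
proof (induction A rule: finite_induct)
  case empty then show ?case by (simp add: fin_supp_def)
next
  case (insert x F) then show ?case by (simp add: fs_add)
qed

lemma ev1_sum_fs: "finite A \<Longrightarrow> (\<And>n. n \<in> A \<Longrightarrow> fin_supp (g n)) \<Longrightarrow>
    ev1 s D (\<lambda>l. \<Sum>n\<in>A. g n l) P = (\<Sum>n\<in>A. ev1 s D (g n) P)"
proof (induction A rule: finite_induct)
  case empty then show ?case by simp
next
  case (insert x F)
  then show ?case by (simp add: ev1_add_fs fs_sum)
qed

lemma rco_pcomp: "pcompose (rco n k pX) Y = rco n k Y"
  by (simp add: rco_def pcompose_smult pcompose_pow pcompose_pCons)

end

context bh begin

lemma PT_skew: "a \<in> GM i \<Longrightarrow> b \<in> GM j \<Longrightarrow> PT (\<psi> a) (\<phi> b) = (\<lambda>n. - sgnx i j (snM (PT (\<psi> b) (\<phi> a)) n))"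
proof -
  assume a: "a \<in> GM i" and b: "b \<in> GM j"
  define h where "h = \<rho> (T (\<psi> a)) (\<phi> b)"
  define f where "f = \<rho> (T (\<psi> b)) (\<phi> a)"
  have fh: "fin_supp h" "fin_supp f" by (simp_all add: h_def f_def rho_fin)
  have L: "PT (\<psi> a) (\<phi> b) = (\<lambda>n. h n - sgnx i j (snM f n))"
    by (simp add: fun_eq_iff PT_hom[OF psi_G[OF a] phi_G[OF b]] pT_def' h_def f_def)
  have R: "PT (\<psi> b) (\<phi> a) = (\<lambda>n. f n - sgnx j i (snM h n))"
    by (simp add: fun_eq_iff PT_hom[OF psi_G[OF b] phi_G[OF a]] pT_def' h_def f_def)
  have "snM (\<lambda>n. f n - sgnx j i (snM h n)) k = snM f k - sgnx j i (h k)" for k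
  proof -
    have "snM (\<lambda>n. f n - sgnx j i (snM h n)) k = snM f k - snM (\<lambda>n. sgnx j i (snM h n)) k"
      by (rule M.sn_diff[OF fh(2) fs_sgnx[OF M.sn_fs[OF fh(1)]]])
    also have "snM (\<lambda>n. sgnx j i (snM h n)) k = sgnx j i (snM (snM h) k)"
      by (rule M.sn_sgnx[OF M.sn_fs[OF fh(1)], symmetric])
    also have "snM (snM h) = h" by (rule M.ev1_sn_sn[OF fh(1)])
    finally show ?thesis .
  qed
  then show ?thesis unfolding L R by (auto simp: fun_eq_iff sgnx_def)
qed

lemma fin2_A: "fin2 (\<lambda>l m. \<rho> x (\<rho> y w m) l)"
proof -
  obtain N where N: "bnd N (\<rho> y w)" using rho_fin by (auto simp: fin_supp_bnd)
  have "fin2 (\<lambda>m l. \<rho> x (\<rho> y w m) l)"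
    by (rule fin2I[of _ N]) (use N in \<open>auto simp: rho_fin bnd_def\<close>)
  then show ?thesis by (rule fin2_swap)
qed

lemma fin2_B: "fin2 (\<lambda>p q. \<rho> (T (PT u v p)) w q)"
proof -
  obtain N where N: "bnd N (PT u v)" using PT_fin by (auto simp: fin_supp_bnd)
  show ?thesis
    by (rule fin2I[of _ N]) (use N in \<open>auto simp: rho_fin bnd_def\<close>)
qed

lemma fin2_Asn: "fin_supp G \<Longrightarrow> fin2 (\<lambda>l m. \<rho> x (snM G m) l)"
proof -
  assume G: "fin_supp G"
  obtain N where N: "bnd N (snM G)" using M.sn_fs[OF G] by (auto simp: fin_supp_bnd)
  have "fin2 (\<lambda>m l. \<rho> x (snM G m) l)"
    by (rule fin2I[of _ N]) (use N in \<open>auto simp: rho_fin bnd_def\<close>)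
  then show ?thesis by (rule fin2_swap)
qed

end


context bh begin

lemma ev1_rho_opD: "ev1 sM DM (\<rho> a (opD sM DM r w)) P = opD sM DM (pcompose r (P + pX)) (ev1 sM DM (\<rho> a w) P)"
proof (induction r)
  case 0
  then show ?case by simp
next
  case (pCons c r)
  define u where "u = opD sM DM r w"
  have e1: "opD sM DM (pCons c r) w = sM c w + DM u" by (simp add: M.opD_pCons u_def)
  have e2: "\<rho> a (sM c w + DM u) = (\<lambda>n. sM c (\<rho> a w n) + (DM (\<rho> a u n) + lam_mul (\<rho> a u) n))"
    by (simp add: rho_add_v_fun rho_scale_v_fun rho_DM)
  have "ev1 sM DM (\<rho> a (opD sM DM (pCons c r) w)) P
      = sM c (ev1 sM DM (\<rho> a w) P) + (DM (ev1 sM DM (\<rho> a u) P) + opD sM DM P (ev1 sM DM (\<rho> a u) P))"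
    unfolding e1 e2
    by (simp add: M.ev1_add_fs fs_add fs_map[of DM] fs_lam rho_fin fs_map[of "sM c"]
        M.ev1_lin_fs[OF M.lin_s] M.D_scale M.ev1_D_fs M.ev1_lam_fs)
  also have "\<dots> = opD sM DM (pcompose (pCons c r) (P + pX)) (ev1 sM DM (\<rho> a w) P)"
    by (simp add: pcompose_pCons M.opD_add M.opD_mult M.opD_const pCons.IH[folded u_def] M.opD_X add_ac)
  finally show ?case .
qed

lemma fin2_AG: "fin_supp G \<Longrightarrow> fin2 (\<lambda>l m. \<rho> x (G m) l)"
proof -
  assume G: "fin_supp G"
  obtain N where N: "bnd N G" using G by (auto simp: fin_supp_bnd)
  have "fin2 (\<lambda>m l. \<rho> x (G m) l)"
    by (rule fin2I[of _ N]) (use N in \<open>auto simp: rho_fin bnd_def\<close>)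
  then show ?thesis by (rule fin2_swap)
qed

lemma ev2_rho_sn:
  assumes G: "fin_supp G"
  shows "ev2 sM DM (\<lambda>l m. \<rho> x (snM G m) l) P Q = ev2 sM DM (\<lambda>l m. \<rho> x (G m) l) P (- P - Q - pX)"
proof -
  obtain N where N: "bnd N G" using G by (auto simp: fin_supp_bnd)
  define E where "E n = ev1 sM DM (\<rho> x (G n)) P" for n
  have EN: "bnd N E" using N by (auto simp: bnd_def E_def)
  have inner: "ev1 sM DM (\<rho> x (snM G m)) P = (\<Sum>n\<le>N. opD sM DM (rco n m (P + pX)) (E n))" for m
  proof -
    have "\<rho> x (snM G m) = (\<lambda>l. \<Sum>n\<le>N. \<rho> x (opD sM DM (rco n m pX) (G n)) l)"
      by (simp add: fun_eq_iff M.sn_bnd_eq[OF N] rho_sum_v)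
    then have "ev1 sM DM (\<rho> x (snM G m)) P = (\<Sum>n\<le>N. ev1 sM DM (\<rho> x (opD sM DM (rco n m pX) (G n))) P)"
      by (simp add: M.ev1_sum_fs rho_fin)
    also have "\<dots> = (\<Sum>n\<le>N. opD sM DM (rco n m (P + pX)) (E n))"
      by (simp add: ev1_rho_opD M.rco_pcomp E_def)
    finally show ?thesis .
  qed
  have innerN: "bnd N (\<lambda>m. ev1 sM DM (\<rho> x (snM G m)) P)"
    unfolding bnd_def inner by (auto simp: rco_def intro!: sum.neutral)
  have "ev2 sM DM (\<lambda>l m. \<rho> x (snM G m) l) P Q = ev2 sM DM (\<lambda>m l. \<rho> x (snM G m) l) Q P"
    by (rule M.ev2_swap_f[OF fin2_swap[OF fin2_Asn[OF G]], simplified])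
  also have "\<dots> = ev1 sM DM (\<lambda>m. ev1 sM DM (\<rho> x (snM G m)) P) Q"
    by (simp add: ev2_def)
  also have "\<dots> = (\<Sum>m\<le>N. opD sM DM (Q ^ m) (\<Sum>n\<le>N. opD sM DM (rco n m (P + pX)) (E n)))"
    by (simp only: M.ev1_bnd[OF innerN]) (simp add: inner)
  also have "\<dots> = (\<Sum>n\<le>N. opD sM DM (\<Sum>m\<le>N. Q ^ m * rco n m (P + pX)) (E n))"
    by (simp only: M.opD_vsum M.opD_sum M.opD_mult) (rule sum.swap)
  also have "\<dots> = (\<Sum>n\<le>N. opD sM DM ((- Q - (P + pX)) ^ n) (E n))"
    by (intro sum.cong refl) (simp add: polybin)
  also have "\<dots> = ev1 sM DM E (- Q - (P + pX))"
    by (simp add: M.ev1_bnd[OF EN])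
  also have "- Q - (P + pX) = - P - Q - pX" by simp
  also have "ev1 sM DM E (- P - Q - pX) = ev2 sM DM (\<lambda>m l. \<rho> x (G m) l) (- P - Q - pX) P"
    unfolding ev2_def E_def by (simp add: eta_contract_eq)
  also have "\<dots> = ev2 sM DM (\<lambda>l m. \<rho> x (G m) l) P (- P - Q - pX)"
    using M.ev2_swap_f[OF fin2_AG[OF G, of x], where P="- P - Q - pX" and Q=P] by simp
  finally show ?thesis .
qed

lemma mjM:
  assumes x: "x \<in> GM i" and y: "y \<in> GM j"
  shows "subst_sum sM (\<lambda>p q. \<rho> (T (PT (\<psi> x) y p)) (\<psi> w) q)
    = (\<lambda>l m. \<rho> (T (\<phi> (\<psi> x))) (\<rho> (T y) w m) l - sgnx i j (\<rho> (T (\<psi> y)) (\<rho> (T (\<phi> x)) w l) m))"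
proof -
  have br: "brR (\<beta> (T x)) (T y) = (\<lambda>n. T (PT (\<psi> x) y n))"
    using Top[OF psi_G[OF x] y] by (simp add: Tpsi PT_hom[OF psi_G[OF x] y])
  show ?thesis
  proof (intro ext)
    fix l m
    have e: "subst_sum sM (\<lambda>p q. \<rho> (brR (\<beta> (T x)) (T y) p) (\<psi> w) q) l m
      = \<rho> (\<alpha> (\<beta> (T x))) (\<rho> (T y) w m) l - sgnx i j (\<rho> (\<beta> (T y)) (\<rho> (\<alpha> (T x)) w l) m)"
      by (rule mj[OF T_G[OF x] T_G[OF y]])
    show "subst_sum sM (\<lambda>p q. \<rho> (T (PT (\<psi> x) y p)) (\<psi> w) q) l m
      = \<rho> (T (\<phi> (\<psi> x))) (\<rho> (T y) w m) l - sgnx i j (\<rho> (T (\<psi> y)) (\<rho> (T (\<phi> x)) w l) m)"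
      using e unfolding br by (simp add: Tpsi Tphi)
  qed
qed

lemma mj_ev:
  assumes x: "x \<in> GM i" and y: "y \<in> GM j"
  shows "ev2 sM DM (\<lambda>p q. \<rho> (T (PT (\<psi> x) y p)) (\<psi> w) q) P R
    = ev2 sM DM (\<lambda>l m. \<rho> (T (\<phi> (\<psi> x))) (\<rho> (T y) w m) l) P (R - P)
      - sgnx i j (ev2 sM DM (\<lambda>l m. \<rho> (T (\<psi> y)) (\<rho> (T (\<phi> x)) w m) l) (R - P) P)"
proof -
  have "ev2 sM DM (\<lambda>p q. \<rho> (T (PT (\<psi> x) y p)) (\<psi> w) q) P R
      = ev2 sM DM (\<lambda>p q. \<rho> (T (PT (\<psi> x) y p)) (\<psi> w) q) P (P + (R - P))" by simp
  also have "\<dots> = ev2 sM DM (subst_sum sM (\<lambda>p q. \<rho> (T (PT (\<psi> x) y p)) (\<psi> w) q)) P (R - P)"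
    by (rule M.ev2_ss_f[OF fin2_B, symmetric])
  also have "\<dots> = ev2 sM DM (\<lambda>l m. \<rho> (T (\<phi> (\<psi> x))) (\<rho> (T y) w m) l - sgnx i j (\<rho> (T (\<psi> y)) (\<rho> (T (\<phi> x)) w l) m)) P (R - P)"
    by (simp only: mjM[OF x y])
  also have "\<dots> = ev2 sM DM (\<lambda>l m. \<rho> (T (\<phi> (\<psi> x))) (\<rho> (T y) w m) l) P (R - P)
      - sgnx i j (ev2 sM DM (\<lambda>l m. \<rho> (T (\<psi> y)) (\<rho> (T (\<phi> x)) w l) m) P (R - P))"
    by (simp add: M.ev2_diff_f M.ev2_sgnx_f fin2_A fin2_sgnx fin2_swap[OF fin2_A])
  also have "ev2 sM DM (\<lambda>l m. \<rho> (T (\<psi> y)) (\<rho> (T (\<phi> x)) w l) m) P (R - P)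
      = ev2 sM DM (\<lambda>l m. \<rho> (T (\<psi> y)) (\<rho> (T (\<phi> x)) w m) l) (R - P) P"
    by (rule M.ev2_swap_f[OF fin2_A])
  finally show ?thesis .
qed

end


context bh begin

definition AA where "AA x y w P Q = ev2 sM DM (\<lambda>l m. \<rho> (T x) (\<rho> (T y) w m) l) P Q"

lemmas nfs = iphi1 iphi2 ipsi1 ipsi2 nf1 nf2 nf3 nf4

lemma fin2_V: "fin2 (\<lambda>p n. \<rho> x (PT u v p) n)"
  using fin2_swap[OF fin2_AG[OF PT_fin[of u v], of x]] by simp

lemma evL:
  assumes a: "a \<in> GM i" and b: "b \<in> GM j" and c: "c \<in> GM k"
  shows "ev2 sM DM (\<lambda>l m. PT (\<phi> (\<psi> a)) (PT b c m) l) P Q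
    = AA (\<phi> (\<psi> a)) b c P Q - sgnx j k (AA (\<phi> (\<psi> a)) (inv \<phi> (\<psi> c)) (\<phi> (inv \<psi> b)) P (- P - Q - pX))
      - sgnx i (j \<noteq> k) (AA (\<psi> b) (inv \<phi> (\<psi> c)) (\<phi> (\<phi> (inv \<psi> a))) Q (- P - Q - pX)
         - sgnx j k (AA (inv \<phi> (\<psi> (\<psi> c))) b (\<phi> (\<phi> (inv \<psi> a))) (- P - Q - pX) Q))"
proof -
  define A1 where "A1 = (\<lambda>l m. \<rho> (T (\<phi> (\<psi> a))) (\<rho> (T b) c m) l)"
  define G1 where "G1 = \<rho> (T (inv \<phi> (\<psi> c))) (\<phi> (inv \<psi> b))"
  define H1 where "H1 = (\<lambda>l m. \<rho> (T (\<phi> (\<psi> a))) (snM G1 m) l)"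
  define Bx where "Bx = (\<lambda>p q. \<rho> (T (PT (inv \<phi> (\<psi> b)) (inv \<phi> (\<psi> c)) p)) (\<phi> (\<phi> a)) q)"
  have F: "(\<lambda>l m. PT (\<phi> (\<psi> a)) (PT b c m) l) = (\<lambda>l m. (A1 l m - sgnx j k (H1 l m)) - sgnx i (j \<noteq> k) (snM (\<lambda>n. Bx m n) l))"
  proof (intro ext)
    fix l m
    have bc: "PT b c m \<in> GM (j \<noteq> k)" by (rule PT_gr[OF b c])
    have e1: "\<rho> (T (\<phi> (\<psi> a))) (PT b c m) l = A1 l m - sgnx j k (H1 l m)"
      by (simp add: PT_hom[OF b c] pT_def' rho_diff_v rho_sgnx_v A1_def H1_def G1_def)
    have e2: "inv \<phi> (\<psi> (PT b c m)) = PT (inv \<phi> (\<psi> b)) (inv \<phi> (\<psi> c)) m" by (simp add: psi_PT iphi_PT)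
    have e3: "\<phi> (inv \<psi> (\<phi> (\<psi> a))) = \<phi> (\<phi> a)" by simp
    have "PT (\<phi> (\<psi> a)) (PT b c m) l = \<rho> (T (\<phi> (\<psi> a))) (PT b c m) l
        - sgnx i (j \<noteq> k) (snM (\<rho> (T (inv \<phi> (\<psi> (PT b c m)))) (\<phi> (inv \<psi> (\<phi> (\<psi> a))))) l)"
      by (simp only: PT_hom[OF phi_G[OF psi_G[OF a]] bc] pT_def')
    also have "\<dots> = (A1 l m - sgnx j k (H1 l m)) - sgnx i (j \<noteq> k) (snM (\<lambda>n. Bx m n) l)"
      by (simp only: e1 e2 e3 Bx_def)
    finally show "PT (\<phi> (\<psi> a)) (PT b c m) l = (A1 l m - sgnx j k (H1 l m)) - sgnx i (j \<noteq> k) (snM (\<lambda>n. Bx m n) l)" .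
  qed
  have fA1: "fin2 A1" unfolding A1_def by (rule fin2_A)
  have fH1: "fin2 H1" unfolding H1_def G1_def by (rule fin2_Asn[OF rho_fin])
  have fBx: "fin2 Bx" unfolding Bx_def by (rule fin2_B)
  have fS: "fin2 (\<lambda>l m. snM (\<lambda>n. Bx m n) l)" using M.fin2_sn1[OF fin2_swap[OF fBx]] by simp
  have evH1: "ev2 sM DM H1 P Q = AA (\<phi> (\<psi> a)) (inv \<phi> (\<psi> c)) (\<phi> (inv \<psi> b)) P (- P - Q - pX)"
    unfolding H1_def AA_def G1_def by (simp only: ev2_rho_sn[OF rho_fin])
  have z1: "- P - pX - Q = - P - Q - pX" by (simp add: algebra_simps)
  note mjL = mj_ev[OF iphi_G[OF b] iphi_G[OF psi_G[OF c]], where w="\<phi> (\<phi> (inv \<psi> a))" and P=Q and R="- P - pX", unfolded z1]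
  have evS: "ev2 sM DM (\<lambda>l m. snM (\<lambda>n. Bx m n) l) P Q
      = AA (\<psi> b) (inv \<phi> (\<psi> c)) (\<phi> (\<phi> (inv \<psi> a))) Q (- P - Q - pX)
         - sgnx j k (AA (inv \<phi> (\<psi> (\<psi> c))) b (\<phi> (\<phi> (inv \<psi> a))) (- P - Q - pX) Q)"
  proof -
    have "ev2 sM DM (\<lambda>l m. snM (\<lambda>n. Bx m n) l) P Q = ev2 sM DM (\<lambda>n m. Bx m n) (- P - pX) Q"
      using M.ev2_sn1_f[OF fin2_swap[OF fBx], where P=P and Q=Q] by simp
    also have "\<dots> = ev2 sM DM Bx Q (- P - pX)"
      by (rule M.ev2_swap_f[OF fBx])
    also have "\<dots> = AA (\<psi> b) (inv \<phi> (\<psi> c)) (\<phi> (\<phi> (inv \<psi> a))) Q (- P - Q - pX)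
         - sgnx j k (AA (inv \<phi> (\<psi> (\<psi> c))) b (\<phi> (\<phi> (inv \<psi> a))) (- P - Q - pX) Q)"
      using mjL unfolding Bx_def AA_def by (simp only: nfs)
    finally show ?thesis .
  qed
  have "ev2 sM DM (\<lambda>l m. PT (\<phi> (\<psi> a)) (PT b c m) l) P Q
      = (ev2 sM DM A1 P Q - sgnx j k (ev2 sM DM H1 P Q)) - sgnx i (j \<noteq> k) (ev2 sM DM (\<lambda>l m. snM (\<lambda>n. Bx m n) l) P Q)"
    unfolding F
    by (simp add: M.ev2_diff_f M.ev2_sgnx_f fin2_diff fin2_sgnx fA1 fH1 fS)
  also have "\<dots> = AA (\<phi> (\<psi> a)) b c P Q - sgnx j k (AA (\<phi> (\<psi> a)) (inv \<phi> (\<psi> c)) (\<phi> (inv \<psi> b)) P (- P - Q - pX))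
      - sgnx i (j \<noteq> k) (AA (\<psi> b) (inv \<phi> (\<psi> c)) (\<phi> (\<phi> (inv \<psi> a))) Q (- P - Q - pX)
         - sgnx j k (AA (inv \<phi> (\<psi> (\<psi> c))) b (\<phi> (\<phi> (inv \<psi> a))) (- P - Q - pX) Q))"
    by (simp only: evH1 evS) (simp add: AA_def A1_def)
  finally show ?thesis .
qed

lemma evR1:
  assumes a: "a \<in> GM i" and b: "b \<in> GM j" and c: "c \<in> GM k"
  shows "ev2 sM DM (subst_sum sM (\<lambda>p q. PT (PT (\<psi> a) b p) (\<psi> c) q)) P Q
    = (AA (\<phi> (\<psi> a)) b c P Q - sgnx i j (AA (\<psi> b) (\<phi> a) c Q P))
      - sgnx (i \<noteq> j) k (AA (inv \<phi> (\<psi> (\<psi> c))) (\<phi> a) (\<phi> (inv \<psi> b)) (- P - Q - pX) P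
         - sgnx i j (AA (inv \<phi> (\<psi> (\<psi> c))) b (\<phi> (\<phi> (inv \<psi> a))) (- P - Q - pX) Q))"
proof -
  define W1 where "W1 = (\<lambda>p q. \<rho> (T (PT (\<psi> a) b p)) (\<psi> c) q)"
  define X where "X = inv \<phi> (\<psi> (\<psi> c))"
  define V where "V = (\<lambda>p n. \<rho> (T X) (PT (\<phi> a) (\<phi> (inv \<psi> b)) p) n)"
  define V1 where "V1 = (\<lambda>n p. \<rho> (T X) (\<rho> (T (\<phi> a)) (\<phi> (inv \<psi> b)) p) n)"
  define G2 where "G2 = \<rho> (T b) (\<phi> (\<phi> (inv \<psi> a)))"
  define V2 where "V2 = (\<lambda>n p. \<rho> (T X) (snM G2 p) n)"
  have W: "(\<lambda>p q. PT (PT (\<psi> a) b p) (\<psi> c) q) = (\<lambda>p q. W1 p q - sgnx (i \<noteq> j) k (snM (V p) q))"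
  proof (intro ext)
    fix p q
    have ab: "PT (\<psi> a) b p \<in> GM (i \<noteq> j)" by (rule PT_gr[OF psi_G[OF a] b])
    have e2: "\<phi> (inv \<psi> (PT (\<psi> a) b p)) = PT (\<phi> a) (\<phi> (inv \<psi> b)) p" by (simp add: ipsi_PT phi_PT)
    have "PT (PT (\<psi> a) b p) (\<psi> c) q = \<rho> (T (PT (\<psi> a) b p)) (\<psi> c) q
        - sgnx (i \<noteq> j) k (snM (\<rho> (T (inv \<phi> (\<psi> (\<psi> c)))) (\<phi> (inv \<psi> (PT (\<psi> a) b p)))) q)"
      by (simp only: PT_hom[OF ab psi_G[OF c]] pT_def')
    also have "\<dots> = W1 p q - sgnx (i \<noteq> j) k (snM (V p) q)"
      by (simp only: e2 W1_def V_def X_def)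
    finally show "PT (PT (\<psi> a) b p) (\<psi> c) q = W1 p q - sgnx (i \<noteq> j) k (snM (V p) q)" .
  qed
  have Vd: "V = (\<lambda>p n. V1 n p - sgnx i j (V2 n p))"
  proof (intro ext)
    fix p n
    show "V p n = V1 n p - sgnx i j (V2 n p)"
      unfolding V_def V1_def V2_def G2_def
      by (simp add: PT_hom[OF phi_G[OF a] phi_G[OF ipsi_G[OF b]]] pT_def' rho_diff_v rho_sgnx_v)
  qed
  have fW1: "fin2 W1" unfolding W1_def by (rule fin2_B)
  have fV: "fin2 V" unfolding V_def by (rule fin2_V)
  have fSV: "fin2 (\<lambda>p q. snM (V p) q)" by (rule M.fin2_sn2[OF fV])
  have fV1: "fin2 V1" unfolding V1_def by (rule fin2_A)
  have fV2: "fin2 V2" unfolding V2_def G2_def by (rule fin2_Asn[OF rho_fin])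
  have z2: "P + Q - P = Q" by simp
  have z3: "- (- (P + Q) - pX) - P - pX = Q" by simp
  have z4: "- (P + Q) - pX = - P - Q - pX" by (simp add: algebra_simps)
  have evW1: "ev2 sM DM W1 P (P + Q) = AA (\<phi> (\<psi> a)) b c P Q - sgnx i j (AA (\<psi> b) (\<phi> a) c Q P)"
    using mj_ev[OF a b, where w=c and P=P and R="P + Q"] unfolding W1_def AA_def z2 .
  have evV: "ev2 sM DM V P (- (P + Q) - pX) = AA X (\<phi> a) (\<phi> (inv \<psi> b)) (- P - Q - pX) P
         - sgnx i j (AA X b (\<phi> (\<phi> (inv \<psi> a))) (- P - Q - pX) Q)"
  proof -
    have s1: "ev2 sM DM V P (- (P + Q) - pX) = ev2 sM DM (\<lambda>p n. V1 n p) P (- (P + Q) - pX)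
        - ev2 sM DM (\<lambda>p n. sgnx i j (V2 n p)) P (- (P + Q) - pX)"
      unfolding Vd by (rule M.ev2_diff_f[OF fin2_swap[OF fV1] fin2_sgnx[OF fin2_swap[OF fV2]]])
    have s2: "ev2 sM DM (\<lambda>p n. sgnx i j (V2 n p)) P (- (P + Q) - pX) = sgnx i j (ev2 sM DM V2 (- (P + Q) - pX) P)"
      by (simp only: M.ev2_sgnx_f[OF fin2_swap[OF fV2]] M.ev2_swap_f[OF fV2])
    have s3: "ev2 sM DM (\<lambda>p n. V1 n p) P (- (P + Q) - pX) = ev2 sM DM V1 (- (P + Q) - pX) P"
      by (rule M.ev2_swap_f[OF fV1])
    have "ev2 sM DM V P (- (P + Q) - pX) = ev2 sM DM V1 (- (P + Q) - pX) P - sgnx i j (ev2 sM DM V2 (- (P + Q) - pX) P)"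
      unfolding s1 s2 s3 ..
    also have "ev2 sM DM V2 (- (P + Q) - pX) P = AA X b (\<phi> (\<phi> (inv \<psi> a))) (- (P + Q) - pX) Q"
      unfolding V2_def G2_def AA_def by (simp only: ev2_rho_sn[OF rho_fin] z3)
    also have "ev2 sM DM V1 (- (P + Q) - pX) P = AA X (\<phi> a) (\<phi> (inv \<psi> b)) (- (P + Q) - pX) P"
      unfolding V1_def AA_def ..
    finally show ?thesis unfolding z4 .
  qed
  have "ev2 sM DM (subst_sum sM (\<lambda>p q. PT (PT (\<psi> a) b p) (\<psi> c) q)) P Q
      = ev2 sM DM (\<lambda>p q. W1 p q - sgnx (i \<noteq> j) k (snM (V p) q)) P (P + Q)"
    unfolding W by (rule M.ev2_ss_f) (intro fin2_diff fin2_sgnx fW1 fSV)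
  also have "\<dots> = ev2 sM DM W1 P (P + Q) - sgnx (i \<noteq> j) k (ev2 sM DM V P (- (P + Q) - pX))"
    by (simp add: M.ev2_diff_f M.ev2_sgnx_f fin2_sgnx fW1 fSV M.ev2_sn2_f fV)
  also have "\<dots> = (AA (\<phi> (\<psi> a)) b c P Q - sgnx i j (AA (\<psi> b) (\<phi> a) c Q P))
      - sgnx (i \<noteq> j) k (AA (inv \<phi> (\<psi> (\<psi> c))) (\<phi> a) (\<phi> (inv \<psi> b)) (- P - Q - pX) P
         - sgnx i j (AA (inv \<phi> (\<psi> (\<psi> c))) b (\<phi> (\<phi> (inv \<psi> a))) (- P - Q - pX) Q))"
    by (simp only: evW1 evV X_def)
  finally show ?thesis .
qed

lemma evR2:
  assumes a: "a \<in> GM i" and b: "b \<in> GM j" and c: "c \<in> GM k"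
  shows "ev2 sM DM (\<lambda>l m. PT (\<psi> b) (PT (\<phi> a) c l) m) P Q
    = (AA (\<psi> b) (\<phi> a) c Q P - sgnx i k (AA (\<psi> b) (inv \<phi> (\<psi> c)) (\<phi> (\<phi> (inv \<psi> a))) Q (- P - Q - pX)))
      - sgnx j (i \<noteq> k) (AA (\<phi> (\<psi> a)) (inv \<phi> (\<psi> c)) (\<phi> (inv \<psi> b)) P (- P - Q - pX)
         - sgnx i k (AA (inv \<phi> (\<psi> (\<psi> c))) (\<phi> a) (\<phi> (inv \<psi> b)) (- P - Q - pX) P))"
proof -
  define C1 where "C1 = (\<lambda>l m. \<rho> (T (\<psi> b)) (\<rho> (T (\<phi> a)) c l) m)"
  define G3 where "G3 = \<rho> (T (inv \<phi> (\<psi> c))) (\<phi> (\<phi> (inv \<psi> a)))"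
  define C2 where "C2 = (\<lambda>l m. \<rho> (T (\<psi> b)) (snM G3 l) m)"
  define B3 where "B3 = (\<lambda>p q. \<rho> (T (PT (\<psi> a) (inv \<phi> (\<psi> c)) p)) (\<phi> b) q)"
  have F: "(\<lambda>l m. PT (\<psi> b) (PT (\<phi> a) c l) m) = (\<lambda>l m. (C1 l m - sgnx i k (C2 l m)) - sgnx j (i \<noteq> k) (snM (B3 l) m))"
  proof (intro ext)
    fix l m
    have ac: "PT (\<phi> a) c l \<in> GM (i \<noteq> k)" by (rule PT_gr[OF phi_G[OF a] c])
    have e1: "\<rho> (T (\<psi> b)) (PT (\<phi> a) c l) m = C1 l m - sgnx i k (C2 l m)"
      by (simp add: PT_hom[OF phi_G[OF a] c] pT_def' rho_diff_v rho_sgnx_v C1_def C2_def G3_def)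
    have e2: "inv \<phi> (\<psi> (PT (\<phi> a) c l)) = PT (\<psi> a) (inv \<phi> (\<psi> c)) l" by (simp add: psi_PT iphi_PT)
    have e3: "\<phi> (inv \<psi> (\<psi> b)) = \<phi> b" by simp
    have "PT (\<psi> b) (PT (\<phi> a) c l) m = \<rho> (T (\<psi> b)) (PT (\<phi> a) c l) m
        - sgnx j (i \<noteq> k) (snM (\<rho> (T (inv \<phi> (\<psi> (PT (\<phi> a) c l)))) (\<phi> (inv \<psi> (\<psi> b)))) m)"
      by (simp only: PT_hom[OF psi_G[OF b] ac] pT_def')
    also have "\<dots> = (C1 l m - sgnx i k (C2 l m)) - sgnx j (i \<noteq> k) (snM (B3 l) m)"
      by (simp only: e1 e2 e3 B3_def)
    finally show "PT (\<psi> b) (PT (\<phi> a) c l) m = (C1 l m - sgnx i k (C2 l m)) - sgnx j (i \<noteq> k) (snM (B3 l) m)" .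
  qed
  have fC1: "fin2 C1" unfolding C1_def by (rule fin2_swap[OF fin2_A])
  have fC2: "fin2 C2" unfolding C2_def G3_def by (rule fin2_swap[OF fin2_Asn[OF rho_fin]])
  have fB3: "fin2 B3" unfolding B3_def by (rule fin2_B)
  have fS: "fin2 (\<lambda>l m. snM (B3 l) m)" by (rule M.fin2_sn2[OF fB3])
  have z5: "- Q - P - pX = - P - Q - pX" by (simp add: algebra_simps)
  have z6: "- Q - pX - P = - P - Q - pX" by (simp add: algebra_simps)
  have evC1: "ev2 sM DM C1 P Q = AA (\<psi> b) (\<phi> a) c Q P"
    unfolding C1_def AA_def by (rule M.ev2_swap_f[OF fin2_A])
  have evC2: "ev2 sM DM C2 P Q = AA (\<psi> b) (inv \<phi> (\<psi> c)) (\<phi> (\<phi> (inv \<psi> a))) Q (- P - Q - pX)"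
  proof -
    have "ev2 sM DM C2 P Q = ev2 sM DM (\<lambda>l m. \<rho> (T (\<psi> b)) (snM G3 m) l) Q P"
      unfolding C2_def G3_def by (rule M.ev2_swap_f[OF fin2_Asn[OF rho_fin]])
    also have "\<dots> = AA (\<psi> b) (inv \<phi> (\<psi> c)) (\<phi> (\<phi> (inv \<psi> a))) Q (- Q - P - pX)"
      unfolding G3_def AA_def by (rule ev2_rho_sn[OF rho_fin])
    finally show ?thesis unfolding z5 .
  qed
  note mjL = mj_ev[OF a iphi_G[OF psi_G[OF c]], where w="\<phi> (inv \<psi> b)" and P=P and R="- Q - pX", unfolded z6]
  have evS: "ev2 sM DM (\<lambda>l m. snM (B3 l) m) P Q
      = AA (\<phi> (\<psi> a)) (inv \<phi> (\<psi> c)) (\<phi> (inv \<psi> b)) P (- P - Q - pX)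
         - sgnx i k (AA (inv \<phi> (\<psi> (\<psi> c))) (\<phi> a) (\<phi> (inv \<psi> b)) (- P - Q - pX) P)"
  proof -
    have "ev2 sM DM (\<lambda>l m. snM (B3 l) m) P Q = ev2 sM DM B3 P (- Q - pX)"
      by (rule M.ev2_sn2_f[OF fB3])
    also have "\<dots> = AA (\<phi> (\<psi> a)) (inv \<phi> (\<psi> c)) (\<phi> (inv \<psi> b)) P (- P - Q - pX)
         - sgnx i k (AA (inv \<phi> (\<psi> (\<psi> c))) (\<phi> a) (\<phi> (inv \<psi> b)) (- P - Q - pX) P)"
      using mjL unfolding B3_def AA_def by (simp only: nfs)
    finally show ?thesis .
  qed
  have "ev2 sM DM (\<lambda>l m. PT (\<psi> b) (PT (\<phi> a) c l) m) P Q
      = (ev2 sM DM C1 P Q - sgnx i k (ev2 sM DM C2 P Q)) - sgnx j (i \<noteq> k) (ev2 sM DM (\<lambda>l m. snM (B3 l) m) P Q)"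
    unfolding F
    by (simp only: M.ev2_diff_f M.ev2_sgnx_f fin2_diff fin2_sgnx fC1 fC2 fS)
  also have "\<dots> = (AA (\<psi> b) (\<phi> a) c Q P - sgnx i k (AA (\<psi> b) (inv \<phi> (\<psi> c)) (\<phi> (\<phi> (inv \<psi> a))) Q (- P - Q - pX)))
      - sgnx j (i \<noteq> k) (AA (\<phi> (\<psi> a)) (inv \<phi> (\<psi> c)) (\<phi> (inv \<psi> b)) P (- P - Q - pX)
         - sgnx i k (AA (inv \<phi> (\<psi> (\<psi> c))) (\<phi> a) (\<phi> (inv \<psi> b)) (- P - Q - pX) P))"
    by (simp only: evC1 evC2 evS)
  finally show ?thesis .
qed

end


context bh begin

lemma PT_zero2[simp]: "PT u 0 n = 0"
  by (simp add: prodT_def lin_zero[OF GMs.lin_gproj])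
lemma PT_zero1[simp]: "PT 0 v n = 0"
  by (simp add: prodT_def lin_zero[OF GMs.lin_gproj])

lemma fin2_PP1: "fin2 (\<lambda>p q. PT (PT u v p) w q)"
proof -
  obtain N where N: "bnd N (PT u v)" using PT_fin by (auto simp: fin_supp_bnd)
  show ?thesis by (rule fin2I[of _ N]) (use N in \<open>auto simp: PT_fin bnd_def\<close>)
qed

lemma fin2_PP2: "fin2 (\<lambda>p q. PT w (PT u v p) q)"
proof -
  obtain N where N: "bnd N (PT u v)" using PT_fin by (auto simp: fin_supp_bnd)
  show ?thesis by (rule fin2I[of _ N]) (use N in \<open>auto simp: PT_fin bnd_def\<close>)
qed

lemma jacobi_fun:
  assumes a: "a \<in> GM i" and b: "b \<in> GM j" and c: "c \<in> GM k"
  shows "(\<lambda>l m. PT (\<phi> (\<psi> a)) (PT b c m) l)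
    = (\<lambda>l m. subst_sum sM (\<lambda>p q. PT (PT (\<psi> a) b p) (\<psi> c) q) l m + sgnx i j (PT (\<psi> b) (PT (\<phi> a) c l) m))"
proof -
  have f1: "fin2 (\<lambda>l m. PT (\<phi> (\<psi> a)) (PT b c m) l)" using fin2_swap[OF fin2_PP2] by simp
  have f2: "fin2 (subst_sum sM (\<lambda>p q. PT (PT (\<psi> a) b p) (\<psi> c) q))" by (rule M.fin2_ss[OF fin2_PP1])
  have f3: "fin2 (\<lambda>l m. PT (\<psi> b) (PT (\<phi> a) c l) m)" by (rule fin2_PP2)
  show ?thesis
  proof (rule M.uniq2_f[OF f1 fin2_add[OF f2 fin2_sgnx[OF f3]]])
    fix x y
    show "ev2 sM DM (\<lambda>l m. PT (\<phi> (\<psi> a)) (PT b c m) l) [:x:] [:y:] =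
      ev2 sM DM (\<lambda>l m. subst_sum sM (\<lambda>p q. PT (PT (\<psi> a) b p) (\<psi> c) q) l m + sgnx i j (PT (\<psi> b) (PT (\<phi> a) c l) m)) [:x:] [:y:]"
      unfolding M.ev2_add_f[OF f2 fin2_sgnx[OF f3]] M.ev2_sgnx_f[OF f3]
      unfolding evL[OF a b c] evR1[OF a b c] evR2[OF a b c]
      by (cases i; cases j; cases k) (simp_all add: sgnx_def algebra_simps)
  qed
qed

lemma main: "bihom_lcsa sM GM DM PT \<phi> \<psi>"
  unfolding bihom_lcsa_def
proof (intro conjI allI ballI)
  show "graded_space sM GM" by (rule gM)
  show "lin sM sM DM" by (rule lDM)
  show "even_map GM GM DM" by (rule eDM)
  show "lin sM sM \<phi>" by (rule lphi)
  show "lin sM sM \<psi>" by (rule lpsi)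
  show "even_map GM GM \<phi>" by (rule ephi)
  show "even_map GM GM \<psi>" by (rule epsi)
  show "\<phi> \<circ> \<psi> = \<psi> \<circ> \<phi>" by (simp add: fun_eq_iff)
  fix b n show "lin sM sM (\<lambda>a. PT a b n)" by (simp add: lin_def PT_add1 PT_scale1)
next
  fix a n show "lin sM sM (\<lambda>b. PT a b n)" by (simp add: lin_def PT_add2 PT_scale2)
next
  fix a b show "fin_supp (PT a b)" by (rule PT_fin)
next
  fix i j a b n assume "a \<in> GM i" "b \<in> GM j"
  then show "PT a b n \<in> GM (i \<noteq> j)" by (rule PT_gr)
next
  show "\<phi> \<circ> DM = DM \<circ> \<phi>" by (simp add: fun_eq_iff phiD)
  show "\<psi> \<circ> DM = DM \<circ> \<psi>" by (simp add: fun_eq_iff psiD)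
next
  fix a b n show "\<phi> (PT a b n) = PT (\<phi> a) (\<phi> b) n" by (rule phi_PT)
next
  fix a b n show "\<psi> (PT a b n) = PT (\<psi> a) (\<psi> b) n" by (rule psi_PT)
next
  fix a b show "PT (DM a) b = (\<lambda>n. - lam_mul (PT a b) n)" by (rule PT_D1)
next
  fix a b show "PT a (DM b) = (\<lambda>n. DM (PT a b n) + lam_mul (PT a b) n)" by (rule PT_D2)
next
  fix i j a b assume "a \<in> GM i" "b \<in> GM j"
  then show "PT (\<psi> a) (\<phi> b) = (\<lambda>n. - sgnx i j (subst_neg sM DM (PT (\<psi> b) (\<phi> a)) n))"
    by (rule PT_skew)
next
  fix i j k a b c l m assume "a \<in> GM i" "b \<in> GM j" "c \<in> GM k"
  from jacobi_fun[OF this] show "PT (\<phi> (\<psi> a)) (PT b c m) l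
    = subst_sum sM (\<lambda>p q. PT (PT (\<psi> a) b p) (\<psi> c) q) l m + sgnx i j (PT (\<psi> b) (PT (\<phi> a) c l) m)"
    by (metis)
qed

end

theorem mainTheorem8:
  fixes sR :: "complex \<Rightarrow> 'r::ab_group_add \<Rightarrow> 'r" and GR :: "bool \<Rightarrow> 'r set"
    and DR \<alpha> \<beta> :: "'r \<Rightarrow> 'r" and brR :: "'r \<Rightarrow> 'r \<Rightarrow> nat \<Rightarrow> 'r"
    and sM :: "complex \<Rightarrow> 'm::ab_group_add \<Rightarrow> 'm" and GM :: "bool \<Rightarrow> 'm set"
    and DM \<phi> \<psi> :: "'m \<Rightarrow> 'm" and \<rho> :: "'r \<Rightarrow> 'm \<Rightarrow> nat \<Rightarrow> 'm" and T :: "'m \<Rightarrow> 'r"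
  assumes "bihom_lcsa sR GR DR brR \<alpha> \<beta>" and "bij \<alpha>" and "bij \<beta>"
    and "bihom_conf_module sR GR DR brR \<alpha> \<beta> sM GM DM \<rho> \<phi> \<psi>" and "bij \<phi>" and "bij \<psi>"
    and "O_operator sR GR DR brR \<alpha> \<beta> sM GM DM \<rho> \<phi> \<psi> T"
  shows "bihom_lcsa sM GM DM (prodT sM GM DM \<rho> \<phi> \<psi> T) \<phi> \<psi>"
proof -
  interpret bh sR GR DR \<alpha> \<beta> brR sM GM DM \<phi> \<psi> \<rho> T
    using assms by (simp add: bh_def)
  show ?thesis by (rule main)
qed


end
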